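(* Assume $\gamma:=\sum_{k,m\ge1}p_kp_m\gamma_{k,m}<\infty$. Then the quantity \[ v=1-\frac2\gamma\,\mathbb{E}\Big(\xi_0\frac{\mathcal C(\mathbf{T}_0^* )}{\mathcal C(\mathbf{T})}\Big) \] is strictly positive.
   Context: Let $(p_j)_{j\ge 0}$ be an offspring distribution with $p_0=0$ and $\mu:=\sum_{j\ge1} j p_j\in(1,\infty)$. For a vertex $x$ of a tree, its index is $\hat\iota(x)=\deg(x)-1$. For every unordered pair $\{k,m\}$ of positive integers let $\tilde\mu_{k,m}=\tilde\mu_{m,k}$ be a probability law on $(0,\infty)$ with mean $\gamma_{k,m}\in(0,\infty]$. The augmented weighted Galton--Watson tree (law $\mathbb{P}$, expectation $\mathbb{E}$) is constructed as follows: choose $k\ge1$ with probability $p_k$; the root $\mathbf{o}$ has $k+1$ neighbours $w_0,\dots,w_k$ joined by edges $\ell_0,\dots,\ell_k$; each $w_j$ is the root of an independent Galton--Watson tree $\mathbf{T}_j$ with offspring law $(p_j)$ (so every non-root vertex has index equal to its number of children). Conditionally on the tree, the conductances $\xi(e)>0$ are independent, an edge joining vertices of indices $k$ and $m$ having law $\tilde\mu_{k,m}$. Write $\xi_0=\xi(\ell_0)$. $\mathcal C(\cdot)$ denotes the effective conductance from the root to infinity of a weighted rooted tree; $\mathbf{T}_0^*$ denotes $\mathbf{T}_0$ (rooted at $w_0$) together with the edge $\ell_0$, rooted at $\mathbf{o}$. (This $v$ is the almost sure limit of $|X_n|/n$ for the random walk started at $\mathbf{o}$ jumping from $x$ to neighbour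 $y$ with probability $\xi(x,y)/\sum_{z\sim x}\xi(x,z)$.) *)

theory Defs
  imports "HOL-Probability.Probability"
begin

text \<open>
Vertices of the augmented Galton--Watson tree are encoded as lists of natural numbers
(Ulam--Harris labels, written in reverse: the child number i of vertex x is i # x). An offspring field N : nat list => nat is sampled i.i.d. with law p.
The root has N [] + 1 children w_0 = [0], ..., w_k = [k] (so its index is k = N []),
and every non-root vertex x has N x children (so its index is N x).
\<close>

definition nchild :: "(nat list \<Rightarrow> nat) \<Rightarrow> nat list \<Rightarrow> nat" where
  "nchild N x = (if x = [] then Suc (N []) else N x)"

text \<open>Conductances: for every vertex x and every pair (k,m) an independent variable
Xi x k m with law mu k m is sampled; the edge from the parent x to its child i # x
(indices N x and N (i # x)) gets conductance Xi (i # x) (N x) (N (i # x)).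
Conditionally on the tree these are independent with the required laws.\<close>

fun cond_edge :: "(nat list \<Rightarrow> nat) \<Rightarrow> (nat list \<Rightarrow> nat \<Rightarrow> nat \<Rightarrow> real) \<Rightarrow> nat list \<Rightarrow> real" where
  "cond_edge N Xi [] = 0"
| "cond_edge N Xi (i # x) = Xi (i # x) (N x) (N (i # x))"

text \<open>Series composition of two conductances (with 1/0 = infinity, 1/infinity = 0).\<close>
definition ser :: "ennreal \<Rightarrow> ennreal \<Rightarrow> ennreal" where
  "ser a b = inverse (inverse a + inverse b)"

text \<open>Effective conductance from vertex x to the vertices n generations below x
(those vertices shorted together), within the subtree of x.\<close>
primrec cond_level :: "(nat list \<Rightarrow> nat) \<Rightarrow> (nat list \<Rightarrow> nat \<Rightarrow> nat \<Rightarrow> real) \<Rightarrow> nat \<Rightarrow> nat list \<Rightarrow> ennreal" where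
  "cond_level N Xi 0 x = \<top>"
| "cond_level N Xi (Suc n) x =
     (\<Sum>i<nchild N x. ser (ennreal (cond_edge N Xi (i # x))) (cond_level N Xi n (i # x)))"

definition eff_cond :: "(nat list \<Rightarrow> nat) \<Rightarrow> (nat list \<Rightarrow> nat \<Rightarrow> nat \<Rightarrow> real) \<Rightarrow> nat list \<Rightarrow> ennreal" where
  "eff_cond N Xi x = (INF n. cond_level N Xi n x)"

definition C_T :: "(nat list \<Rightarrow> nat) \<Rightarrow> (nat list \<Rightarrow> nat \<Rightarrow> nat \<Rightarrow> real) \<Rightarrow> ennreal" where
  "C_T N Xi = eff_cond N Xi []"

definition xi0 :: "(nat list \<Rightarrow> nat) \<Rightarrow> (nat list \<Rightarrow> nat \<Rightarrow> nat \<Rightarrow> real) \<Rightarrow> real" where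
  "xi0 N Xi = cond_edge N Xi [0]"

text \<open>C(T_0^*): T_0 (rooted at w_0) plus the edge l_0, rooted at the root.\<close>
definition C_T0star :: "(nat list \<Rightarrow> nat) \<Rightarrow> (nat list \<Rightarrow> nat \<Rightarrow> nat \<Rightarrow> real) \<Rightarrow> ennreal" where
  "C_T0star N Xi = ser (ennreal (xi0 N Xi)) (eff_cond N Xi [0])"

text \<open>Laws mu k m are only relevant for k, m >= 1; fill the rest with a dummy law.\<close>
definition mu_ext :: "(nat \<Rightarrow> nat \<Rightarrow> real measure) \<Rightarrow> nat \<Rightarrow> nat \<Rightarrow> real measure" where
  "mu_ext \<mu> k m = (if 1 \<le> k \<and> 1 \<le> m then \<mu> k m else return borel 1)"

definition gw_space :: "nat pmf \<Rightarrow> (nat \<Rightarrow> nat \<Rightarrow> real measure)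
    \<Rightarrow> ((nat list \<Rightarrow> nat) \<times> (nat list \<Rightarrow> nat \<Rightarrow> nat \<Rightarrow> real)) measure" where
  "gw_space p \<mu> =
     (\<Pi>\<^sub>M x\<in>UNIV. measure_pmf p) \<Otimes>\<^sub>M
     (\<Pi>\<^sub>M x\<in>UNIV. \<Pi>\<^sub>M k\<in>UNIV. \<Pi>\<^sub>M m\<in>UNIV. mu_ext \<mu> k m)"

definition gamma_km :: "(nat \<Rightarrow> nat \<Rightarrow> real measure) \<Rightarrow> nat \<Rightarrow> nat \<Rightarrow> ennreal" where
  "gamma_km \<mu> k m = (\<integral>\<^sup>+ x. ennreal x \<partial>(\<mu> k m))"

definition gamma_tot :: "nat pmf \<Rightarrow> (nat \<Rightarrow> nat \<Rightarrow> real measure) \<Rightarrow> ennreal" where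
  "gamma_tot p \<mu> = (\<Sum>k. \<Sum>m. ennreal (pmf p (Suc k) * pmf p (Suc m)) * gamma_km \<mu> (Suc k) (Suc m))"

definition key_expect :: "nat pmf \<Rightarrow> (nat \<Rightarrow> nat \<Rightarrow> real measure) \<Rightarrow> ennreal" where
  "key_expect p \<mu> = (\<integral>\<^sup>+ \<omega>. ennreal (xi0 (fst \<omega>) (snd \<omega>)) * C_T0star (fst \<omega>) (snd \<omega>)
                                / C_T (fst \<omega>) (snd \<omega>) \<partial>gw_space p \<mu>)"

definition speed_v :: "nat pmf \<Rightarrow> (nat \<Rightarrow> nat \<Rightarrow> real measure) \<Rightarrow> real" where
  "speed_v p \<mu> = 1 - 2 / enn2real (gamma_tot p \<mu>) * enn2real (key_expect p \<mu>)"

end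

theory Submission
  imports Defs "HOL-Probability.Probability"
begin

lemma ennreal_inverse_antimono:
  fixes y y' :: ennreal
  assumes "y \<le> y'" shows "inverse y' \<le> inverse y"
proof (cases "y = 0")
  case True then show ?thesis by simp
next
  case False
  show ?thesis
  proof (cases "y' = top")
    case True then show ?thesis by simp
  next
    case False
    with \<open>y \<noteq> 0\<close> assms obtain r r' where r: "y = ennreal r" "y' = ennreal r'" "0 < r" "r \<le> r'"
      by (cases y rule: ennreal_cases; cases y' rule: ennreal_cases)
         (auto simp: top_unique ennreal_le_iff2)
    then show ?thesis
      by (simp add: inverse_ennreal ennreal_leI le_imp_inverse_le)
  qed
qed

lemma ser_mono2: "b \<le> b' \<Longrightarrow> ser a b \<le> ser a b'"
  unfolding ser_def by (intro ennreal_inverse_antimono add_left_mono ennreal_inverse_antimono)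

lemma ser_zero2[simp]: "ser a 0 = 0"
  by (simp add: ser_def)

lemma ser_zero1[simp]: "ser 0 b = 0"
  by (simp add: ser_def)

lemma ennreal_inverse_inverse[simp]: "inverse (inverse (a::ennreal)) = a"
proof (cases a rule: ennreal_cases)
  case (real r)
  then show ?thesis
    by (cases "r = 0") (auto simp: inverse_ennreal)
qed simp

lemma ser_top2[simp]: "ser a top = a"
  by (simp add: ser_def)

lemma ser_le1: "ser a b \<le> a"
proof -
  have "ser a b \<le> ser a top" by (rule ser_mono2) simp
  then show ?thesis by simp
qed

lemma continuous_on_ser: "continuous_on UNIV (ser a)"
  unfolding ser_def[abs_def]
  by (intro continuous_on_inverse_ennreal continuous_on_add_ennreal continuous_on_const continuous_on_id)

lemma tendsto_ser: "(f \<longlongrightarrow> l) F \<Longrightarrow> ((\<lambda>n. ser a (f n)) \<longlongrightarrow> ser a l) F"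
  using continuous_on_tendsto_compose[OF continuous_on_ser, of f l F] by simp

lemma cond_level_Suc_le: "cond_level N Xi (Suc n) x \<le> cond_level N Xi n x"
proof (induction n arbitrary: x)
  case 0 then show ?case by simp
next
  case (Suc n)
  show ?case
    unfolding cond_level.simps(2)[of N Xi "Suc n" x] cond_level.simps(2)[of N Xi n x]
    by (intro sum_mono ser_mono2 Suc)
qed

lemma cond_level_decseq: "decseq (\<lambda>n. cond_level N Xi n x)"
  by (intro decseq_SucI cond_level_Suc_le)

lemma cond_level_tendsto: "(\<lambda>n. cond_level N Xi n x) \<longlonglongrightarrow> eff_cond N Xi x"
  unfolding eff_cond_def using LIMSEQ_INF[OF cond_level_decseq] by simp

lemma eff_cond_rec:
  "eff_cond N Xi x = (\<Sum>i<nchild N x. ser (ennreal (cond_edge N Xi (i # x))) (eff_cond N Xi (i # x)))"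
proof -
  have "(\<lambda>n. cond_level N Xi (Suc n) x) \<longlonglongrightarrow> eff_cond N Xi x"
    using cond_level_tendsto LIMSEQ_Suc by blast
  moreover have "(\<lambda>n. cond_level N Xi (Suc n) x) \<longlonglongrightarrow>
      (\<Sum>i<nchild N x. ser (ennreal (cond_edge N Xi (i # x))) (eff_cond N Xi (i # x)))"
    unfolding cond_level.simps
    by (intro tendsto_sum tendsto_ser cond_level_tendsto)
  ultimately show ?thesis using LIMSEQ_unique by blast
qed

lemma eff_cond_le_edges:
  "eff_cond N Xi x \<le> (\<Sum>i<nchild N x. ennreal (cond_edge N Xi (i # x)))"
  unfolding eff_cond_rec[of N Xi x] by (intro sum_mono ser_le1)

lemma eff_cond_finite: "eff_cond N Xi x < top"
  using eff_cond_le_edges[of N Xi x]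
  by (rule le_less_trans) simp


fun sig :: "nat list \<Rightarrow> nat list" where
  "sig [] = [0]"
| "sig [0] = []"
| "sig (0 # i # zs) = Suc i # zs"
| "sig (Suc j # zs) = 0 # j # zs"

lemma sig_sig[simp]: "sig (sig r) = r"
  by (induction r rule: sig.induct) auto

lemma sig_snoc: "r \<noteq> [] \<Longrightarrow> r \<noteq> [0] \<Longrightarrow> sig (r @ [i]) = sig r @ [i]"
  by (induction r rule: sig.induct) auto

definition lpi :: "nat list \<Rightarrow> nat list" where
  "lpi x = rev (sig (rev x))"

lemma lpi_pi[simp]: "lpi (lpi x) = x"
  by (simp add: lpi_def)

lemma lpi_Nil[simp]: "lpi [] = [0]" and lpi_0[simp]: "lpi [0] = []"
  by (simp_all add: lpi_def)

lemma lpi_Suc[simp]: "lpi [Suc j] = [j, 0]" and lpi_i0[simp]: "lpi [i, 0] = [Suc i]"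
  by (simp_all add: lpi_def)

lemma lpi_cons: "x \<noteq> [] \<Longrightarrow> x \<noteq> [0] \<Longrightarrow> lpi (i # x) = i # lpi x"
  by (simp add: lpi_def sig_snoc)

lemma inj_pi: "inj lpi"
  by (metis injI lpi_pi)

lemma bij_pi: "bij lpi"
  by (metis bij_betw_def inj_pi lpi_pi surjI)

lemma lpi_eq_Nil_iff[simp]: "lpi x = [] \<longleftrightarrow> x = [0]"
  by (metis lpi_0 lpi_pi)

lemma lpi_eq_0_iff[simp]: "lpi x = [0] \<longleftrightarrow> x = []"
  by (metis lpi_Nil lpi_pi)

definition rho :: "nat list \<Rightarrow> nat list" where
  "rho x = (if x = [] then [] else if x = [0] then [0] else lpi x)"

lemma rho_rho[simp]: "rho (rho x) = x"
  by (auto simp: rho_def)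

lemma inj_rho: "inj rho"
  by (metis injI rho_rho)

definition TA :: "(nat list \<Rightarrow> nat) \<Rightarrow> (nat list \<Rightarrow> nat)" where
  "TA N = (\<lambda>x. N (lpi x))"

definition TB :: "(nat list \<Rightarrow> nat \<Rightarrow> nat \<Rightarrow> real) \<Rightarrow> (nat list \<Rightarrow> nat \<Rightarrow> nat \<Rightarrow> real)" where
  "TB Xi = (\<lambda>c. if c = [0] then (\<lambda>k m. Xi [0] m k) else Xi (rho c))"

lemma nchild_T: "x \<noteq> [] \<Longrightarrow> x \<noteq> [0] \<Longrightarrow> nchild (TA N) x = nchild N (lpi x)"
  by (simp add: nchild_def TA_def)

lemma edge_T: "x \<noteq> [] \<Longrightarrow> x \<noteq> [0] \<Longrightarrow>
  cond_edge (TA N) (TB Xi) (i # x) = cond_edge N Xi (i # lpi x)"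
  by (simp add: TA_def TB_def rho_def lpi_cons)

lemma level_T: "x \<noteq> [] \<Longrightarrow> x \<noteq> [0] \<Longrightarrow>
  cond_level (TA N) (TB Xi) n x = cond_level N Xi n (lpi x)"
proof (induction n arbitrary: x)
  case 0 then show ?case by simp
next
  case (Suc n)
  have "cond_level (TA N) (TB Xi) n (i # x) = cond_level N Xi n (i # lpi x)" for i
    using Suc.IH[of "i # x"] Suc.prems by (simp add: lpi_cons)
  then show ?case
    using Suc.prems by (simp add: nchild_T edge_T del: cond_edge.simps)
qed

lemma eff_T: "x \<noteq> [] \<Longrightarrow> x \<noteq> [0] \<Longrightarrow>
  eff_cond (TA N) (TB Xi) x = eff_cond N Xi (lpi x)"
  by (simp add: eff_cond_def level_T)

definition aF :: "(nat list \<Rightarrow> nat) \<Rightarrow> (nat list \<Rightarrow> nat \<Rightarrow> nat \<Rightarrow> real) \<Rightarrow> ennreal" where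
  "aF N Xi = eff_cond N Xi [0]"

definition bF :: "(nat list \<Rightarrow> nat) \<Rightarrow> (nat list \<Rightarrow> nat \<Rightarrow> nat \<Rightarrow> real) \<Rightarrow> ennreal" where
  "bF N Xi = (\<Sum>i<N []. ser (ennreal (cond_edge N Xi [Suc i])) (eff_cond N Xi [Suc i]))"

lemma C_T_split: "C_T N Xi = ser (ennreal (xi0 N Xi)) (aF N Xi) + bF N Xi"
  unfolding C_T_def aF_def bF_def xi0_def
  by (subst eff_cond_rec) (simp add: nchild_def sum.lessThan_Suc_shift del: sum.lessThan_Suc)

lemma C_T0star_eq: "C_T0star N Xi = ser (ennreal (xi0 N Xi)) (aF N Xi)"
  by (simp add: C_T0star_def aF_def)

lemma xi0_T: "xi0 (TA N) (TB Xi) = xi0 N Xi"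
  by (simp add: xi0_def TA_def TB_def)

lemma aF_T: "aF (TA N) (TB Xi) = bF N Xi"
proof -
  have "aF (TA N) (TB Xi) = (\<Sum>i<N []. ser (ennreal (cond_edge (TA N) (TB Xi) [i, 0])) (eff_cond (TA N) (TB Xi) [i, 0]))"
    unfolding aF_def by (subst eff_cond_rec) (simp add: nchild_def TA_def)
  also have "\<dots> = bF N Xi"
    unfolding bF_def
  proof (intro sum.cong refl)
    fix i assume "i \<in> {..<N []}"
    show "ser (ennreal (cond_edge (TA N) (TB Xi) [i, 0])) (eff_cond (TA N) (TB Xi) [i, 0]) =
      ser (ennreal (cond_edge N Xi [Suc i])) (eff_cond N Xi [Suc i])"
      using eff_T[of "[i,0]" N Xi] by (simp add: TA_def TB_def rho_def)
  qed
  finally show ?thesis .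
qed

lemma bF_T: "bF (TA N) (TB Xi) = aF N Xi"
proof -
  have "bF (TA N) (TB Xi) = (\<Sum>i<N [0]. ser (ennreal (cond_edge N Xi [i, 0])) (eff_cond N Xi [i, 0]))"
    unfolding bF_def
  proof (intro sum.cong)
    show "{..<TA N []} = {..<N [0]}" by (simp add: TA_def)
    fix i assume "i \<in> {..<N [0]}"
    show "ser (ennreal (cond_edge (TA N) (TB Xi) [Suc i])) (eff_cond (TA N) (TB Xi) [Suc i]) =
      ser (ennreal (cond_edge N Xi [i, 0])) (eff_cond N Xi [i, 0])"
      using eff_T[of "[Suc i]" N Xi] by (simp add: TA_def TB_def rho_def)
  qed
  also have "\<dots> = aF N Xi"
    unfolding aF_def by (subst (2) eff_cond_rec) (simp add: nchild_def)
  finally show ?thesis .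
qed


definition Fr :: "real \<Rightarrow> ennreal \<Rightarrow> ennreal \<Rightarrow> ennreal" where
  "Fr x a b = ennreal x * ser (ennreal x) a / (ser (ennreal x) a + b)"

lemma ser_real: "0 < x \<Longrightarrow> 0 < r \<Longrightarrow> ser (ennreal x) (ennreal r) = ennreal (x * r / (x + r))"
proof -
  assume x: "0 < x" and r: "0 < r"
  have "inverse (ennreal x) + inverse (ennreal r) = ennreal (inverse x) + ennreal (inverse r)"
    using x r by (simp only: inverse_ennreal)
  also have "\<dots> = ennreal (inverse x + inverse r)"
    using x r by (intro ennreal_plus[symmetric]) auto
  finally have "ser (ennreal x) (ennreal r) = inverse (ennreal (inverse x + inverse r))"
    unfolding ser_def by simp
  also have "\<dots> = ennreal (inverse (inverse x + inverse r))"
    using x r by (intro inverse_ennreal add_pos_pos) auto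
  also have "inverse (inverse x + inverse r) = x * r / (x + r)"
    using x r by (simp add: field_simps)
  finally show ?thesis .
qed

lemma real_key_aux:
  fixes x a b :: real
  assumes x: "0 < x" and a: "0 < a" and b: "0 < b"
  shows "(x * a / (x + a)) / (x * a / (x + a) + b) = x * a / (x * a + x * b + a * b)"
proof -
  have q: "x + a \<noteq> 0" using x a by simp
  have "(x * a + x * b + a * b) / (x + a) = x * a / (x + a) + (b * (x + a)) / (x + a)"
    by (simp add: add_divide_distrib[symmetric] algebra_simps)
  then have "x * a / (x + a) + b = (x * a + x * b + a * b) / (x + a)"
    using q by simp
  then show ?thesis using q by simp
qed

lemma real_key_ineq:
  fixes x a b :: real
  assumes x: "0 < x" and a: "0 < a" and b: "0 < b"
  shows "x * (x * a / (x + a)) / (x * a / (x + a) + b) + x * (x * b / (x + b)) / (x * b / (x + b) + a) < x"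
proof -
  define D where "D = x * a + x * b + a * b"
  have D: "0 < D" unfolding D_def using x a b by (intro add_pos_pos mult_pos_pos)
  have e1: "(x * a / (x + a)) / (x * a / (x + a) + b) = x * a / D"
    using real_key_aux[OF x a b] by (simp add: D_def)
  have e2: "(x * b / (x + b)) / (x * b / (x + b) + a) = x * b / D"
    using real_key_aux[OF x b a] by (simp add: D_def algebra_simps)
  have "x * a / D + x * b / D = (x * a + x * b) / D" by (simp add: add_divide_distrib)
  also have "\<dots> < 1" using D a b by (simp add: D_def)
  finally have "x * (x * a / D + x * b / D) < x * 1"
    using x by (intro mult_strict_left_mono) auto
  then show ?thesis
    by (simp add: e1[symmetric] e2[symmetric] distrib_left)
qed

lemma Fr_zero1: "Fr x 0 b = 0"
  by (simp add: Fr_def)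

lemma Fr_zero2: "b < top \<Longrightarrow> Fr x b 0 \<le> ennreal x"
proof -
  assume "b < top"
  have "ser (ennreal x) b < top" using ser_le1[of "ennreal x" b] by (simp add: le_less_trans)
  then have "ser (ennreal x) b / ser (ennreal x) b \<le> 1"
    by (cases "ser (ennreal x) b = 0") auto
  then show ?thesis
    unfolding Fr_def
    using mult_left_mono[of _ 1 "ennreal x"]
    by (simp add: ennreal_times_divide[symmetric])
qed


lemma Fr_pos_pos:
  assumes x: "0 < x" and a: "0 < ra" and b: "0 < rb"
  shows "Fr x (ennreal ra) (ennreal rb) = ennreal (x * (x * ra / (x + ra)) / (x * ra / (x + ra) + rb))"
proof -
  define s where "s = x * ra / (x + ra)"
  have s: "0 < s" using x a by (simp add: s_def)
  have "Fr x (ennreal ra) (ennreal rb) = ennreal x * ennreal s / (ennreal s + ennreal rb)"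
    unfolding Fr_def s_def using ser_real[OF x a] by simp
  also have "\<dots> = ennreal (x * s) / ennreal (s + rb)"
    using x s b by (simp add: ennreal_mult ennreal_plus)
  also have "\<dots> = ennreal (x * s / (s + rb))"
    using x s b by (intro divide_ennreal) auto
  finally show ?thesis by (simp add: s_def)
qed

lemma Fr_nonpos: "x \<le> 0 \<Longrightarrow> Fr x a b = 0"
  by (simp add: Fr_def ennreal_neg)

lemma Fr_sum_le:
  assumes a: "a < top" and b: "b < top"
  shows "Fr x a b + Fr x b a \<le> ennreal x"
proof (cases "0 < x")
  case False then show ?thesis by (simp add: Fr_nonpos)
next
  case x: True
  show ?thesis
  proof (cases "a = 0")
    case True then show ?thesis using Fr_zero2[OF b, of x] by (simp add: Fr_zero1)
  next
    case a0: False
    show ?thesis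
    proof (cases "b = 0")
      case True then show ?thesis using Fr_zero2[OF a, of x] by (simp add: Fr_zero1)
    next
      case b0: False
      obtain ra where ra: "a = ennreal ra" "0 < ra"
        using a a0 by (cases a rule: ennreal_cases) (auto simp: ennreal_eq_0_iff less_le)
      obtain rb where rb: "b = ennreal rb" "0 < rb"
        using b b0 by (cases b rule: ennreal_cases) (auto simp: ennreal_eq_0_iff less_le)
      have "Fr x a b + Fr x b a =
          ennreal (x * (x * ra / (x + ra)) / (x * ra / (x + ra) + rb) + x * (x * rb / (x + rb)) / (x * rb / (x + rb) + ra))"
        using x ra rb by (simp add: Fr_pos_pos ennreal_plus[symmetric] del: ennreal_plus)
      also have "\<dots> \<le> ennreal x"
        using real_key_ineq[OF x ra(2) rb(2)] by (intro ennreal_leI) simp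
      finally show ?thesis .
    qed
  qed
qed

lemma Fr_sum_less:
  assumes x: "0 < x" and a: "a < top" and b: "b < top" and ab: "a = 0 \<longleftrightarrow> b = 0"
  shows "Fr x a b + Fr x b a < ennreal x"
proof (cases "a = 0")
  case True then show ?thesis using ab x by (simp add: Fr_zero1)
next
  case a0: False
  then have b0: "b \<noteq> 0" using ab by simp
  obtain ra where ra: "a = ennreal ra" "0 < ra"
    using a a0 by (cases a rule: ennreal_cases) (auto simp: ennreal_eq_0_iff less_le)
  obtain rb where rb: "b = ennreal rb" "0 < rb"
    using b b0 by (cases b rule: ennreal_cases) (auto simp: ennreal_eq_0_iff less_le)
  have "Fr x a b + Fr x b a =
      ennreal (x * (x * ra / (x + ra)) / (x * ra / (x + ra) + rb) + x * (x * rb / (x + rb)) / (x * rb / (x + rb) + ra))"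
    using x ra rb by (simp add: Fr_pos_pos ennreal_plus[symmetric] del: ennreal_plus)
  also have "\<dots> < ennreal x"
    using real_key_ineq[OF x ra(2) rb(2)] x by (intro ennreal_lessI) auto
  finally show ?thesis .
qed


locale meas_env =
  fixes M :: "'w measure" and NN :: "'w \<Rightarrow> nat list \<Rightarrow> nat" and XX :: "'w \<Rightarrow> nat list \<Rightarrow> nat \<Rightarrow> nat \<Rightarrow> real"
  assumes NN: "\<And>x. (\<lambda>\<omega>. NN \<omega> x) \<in> measurable M (count_space UNIV)"
  and XX: "\<And>x k m. (\<lambda>\<omega>. XX \<omega> x k m) \<in> borel_measurable M"
begin

lemma meas_nchild: "(\<lambda>\<omega>. nchild (NN \<omega>) x) \<in> measurable M (count_space UNIV)"
  unfolding nchild_def using NN by (cases "x = []") auto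

lemma meas_Xi_at: "(\<lambda>\<omega>. XX \<omega> c (NN \<omega> x) (NN \<omega> y)) \<in> borel_measurable M"
proof -
  have "(\<lambda>\<omega>. XX \<omega> c k (NN \<omega> y)) \<in> borel_measurable M" for k
    using measurable_compose_countable[where f="\<lambda>m \<omega>. XX \<omega> c k m" and g="\<lambda>\<omega>. NN \<omega> y", OF XX NN] .
  then show ?thesis
    using measurable_compose_countable[where f="\<lambda>k \<omega>. XX \<omega> c k (NN \<omega> y)" and g="\<lambda>\<omega>. NN \<omega> x", OF _ NN]
    by blast
qed

lemma meas_edge: "(\<lambda>\<omega>. cond_edge (NN \<omega>) (XX \<omega>) c) \<in> borel_measurable M"
  by (cases c) (simp_all add: meas_Xi_at)

lemma meas_ser[measurable]:
  "f \<in> borel_measurable M \<Longrightarrow> g \<in> borel_measurable M \<Longrightarrow> (\<lambda>\<omega>. ser (f \<omega>) (g \<omega>)) \<in> borel_measurable M"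
  unfolding ser_def by (intro borel_measurable_inverse_ennreal borel_measurable_add)

lemma meas_sum_nchild:
  assumes "\<And>i. h i \<in> borel_measurable M"
  shows "(\<lambda>\<omega>. \<Sum>i<nchild (NN \<omega>) x. h i \<omega> :: ennreal) \<in> borel_measurable M"
  using measurable_compose_countable[where f="\<lambda>k \<omega>. \<Sum>i<k. h i \<omega>" and g="\<lambda>\<omega>. nchild (NN \<omega>) x",
      OF _ meas_nchild] assms by auto

lemma meas_level: "(\<lambda>\<omega>. cond_level (NN \<omega>) (XX \<omega>) n x) \<in> borel_measurable M"
proof (induction n arbitrary: x)
  case 0 then show ?case by simp
next
  case (Suc n)
  have "(\<lambda>\<omega>. ser (ennreal (cond_edge (NN \<omega>) (XX \<omega>) (i # x))) (cond_level (NN \<omega>) (XX \<omega>) n (i # x)))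
      \<in> borel_measurable M" for i
    using measurable_compose[OF meas_edge measurable_ennreal] Suc by (intro meas_ser) (auto simp del: cond_edge.simps)
  then show ?case
    by (simp only: cond_level.simps) (rule meas_sum_nchild)
qed

lemma meas_eff: "(\<lambda>\<omega>. eff_cond (NN \<omega>) (XX \<omega>) x) \<in> borel_measurable M"
  unfolding eff_cond_def using meas_level by measurable

lemma meas_xi0: "(\<lambda>\<omega>. xi0 (NN \<omega>) (XX \<omega>)) \<in> borel_measurable M"
  unfolding xi0_def by (rule meas_edge)

lemma meas_aF: "(\<lambda>\<omega>. aF (NN \<omega>) (XX \<omega>)) \<in> borel_measurable M"
  unfolding aF_def by (rule meas_eff)

lemma meas_bF: "(\<lambda>\<omega>. bF (NN \<omega>) (XX \<omega>)) \<in> borel_measurable M"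
proof -
  have "(\<lambda>\<omega>. \<Sum>i<k. ser (ennreal (cond_edge (NN \<omega>) (XX \<omega>) [Suc i])) (eff_cond (NN \<omega>) (XX \<omega>) [Suc i]))
     \<in> borel_measurable M" for k
    using measurable_compose[OF meas_edge measurable_ennreal] meas_eff by (intro borel_measurable_sum meas_ser) (auto simp del: cond_edge.simps)
  then show ?thesis
    unfolding bF_def
    by (rule measurable_compose_countable[where g="\<lambda>\<omega>. NN \<omega> []"
          and f="\<lambda>k \<omega>. \<Sum>i<k. ser (ennreal (cond_edge (NN \<omega>) (XX \<omega>) [Suc i])) (eff_cond (NN \<omega>) (XX \<omega>) [Suc i])", OF _ NN])
qed

lemma meas_Fr:
  "f \<in> borel_measurable M \<Longrightarrow> g \<in> borel_measurable M \<Longrightarrow> h \<in> borel_measurable M \<Longrightarrow>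
   (\<lambda>\<omega>. Fr (f \<omega>) (g \<omega>) (h \<omega>)) \<in> borel_measurable M"
  unfolding Fr_def
  by (intro borel_measurable_divide_ennreal borel_measurable_times_ennreal borel_measurable_add meas_ser
      measurable_compose[OF _ measurable_ennreal])

end


lemma PiM_componentwise:
  assumes M: "\<And>i. i \<in> I \<Longrightarrow> prob_space (M i)"
  and h: "\<And>i. i \<in> I \<Longrightarrow> h i \<in> measurable (M i) (M i)"
  and hd: "\<And>i. i \<in> I \<Longrightarrow> distr (M i) (M i) (h i) = M i"
  shows "distr (PiM I M) (PiM I M) (\<lambda>\<omega>. \<lambda>i\<in>I. h i (\<omega> i)) = PiM I M"
proof -
  let ?M = "\<lambda>i. if i \<in> I then M i else count_space {undefined}"
  interpret M': prob_space "?M i" for i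
    using M by (cases "i \<in> I") (auto intro!: prob_spaceI)
  interpret P: product_prob_space ?M I
    by unfold_locales
  have eqM: "PiM I M = PiM I ?M" by (intro PiM_cong) auto
  have hm: "(\<lambda>\<omega>. \<lambda>i\<in>I. h i (\<omega> i)) \<in> measurable (PiM I M) (PiM I M)"
  proof (intro measurable_restrict)
    fix i assume i: "i \<in> I"
    show "(\<lambda>\<omega>. h i (\<omega> i)) \<in> measurable (PiM I M) (M i)"
      using measurable_compose[OF measurable_component_singleton[OF i, of M] h[OF i]] .
  qed
  show ?thesis
    unfolding eqM
  proof (rule P.PiM_eq)
    show "sets (distr (PiM I ?M) (PiM I ?M) (\<lambda>\<omega>. \<lambda>i\<in>I. h i (\<omega> i))) = sets (PiM I ?M)" by simp
  next
    fix J F assume J: "finite J" "J \<subseteq> I" and F: "\<And>j. j \<in> J \<Longrightarrow> F j \<in> sets (?M j)"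
    have Fs: "F j \<in> sets (M j)" if "j \<in> J" for j using F[OF that] J that by auto
    have hm': "(\<lambda>\<omega>. \<lambda>i\<in>I. h i (\<omega> i)) \<in> measurable (PiM I ?M) (PiM I ?M)"
      using hm unfolding eqM .
    have pe: "prod_emb I ?M J (Pi\<^sub>E J F) \<in> sets (PiM I ?M)"
      using J F by (intro sets_PiM_I) auto
    have "(\<lambda>\<omega>. \<lambda>i\<in>I. h i (\<omega> i)) -` prod_emb I ?M J (Pi\<^sub>E J F) \<inter> space (PiM I ?M) =
        prod_emb I ?M J (Pi\<^sub>E J (\<lambda>j. h j -` F j \<inter> space (M j)))"
      using J h[THEN measurable_space]
      by (auto simp: prod_emb_def space_PiM PiE_iff Pi_iff subset_eq)
    then have "emeasure (distr (PiM I ?M) (PiM I ?M) (\<lambda>\<omega>. \<lambda>i\<in>I. h i (\<omega> i))) (prod_emb I ?M J (Pi\<^sub>E J F))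
        = emeasure (PiM I ?M) (prod_emb I ?M J (Pi\<^sub>E J (\<lambda>j. h j -` F j \<inter> space (M j))))"
      using pe hm' by (simp add: emeasure_distr)
    also have "\<dots> = (\<Prod>j\<in>J. emeasure (?M j) (h j -` F j \<inter> space (M j)))"
      using J Fs h by (intro P.emeasure_PiM_emb) (auto intro!: measurable_sets)
    also have "\<dots> = (\<Prod>j\<in>J. emeasure (?M j) (F j))"
    proof (intro prod.cong refl)
      fix j assume j: "j \<in> J"
      then have "emeasure (M j) (h j -` F j \<inter> space (M j)) = emeasure (distr (M j) (M j) (h j)) (F j)"
        using J Fs h by (subst emeasure_distr) auto
      also have "\<dots> = emeasure (M j) (F j)" using hd J j by auto
      finally show "emeasure (?M j) (h j -` F j \<inter> space (M j)) = emeasure (?M j) (F j)"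
        using J j by auto
    qed
    finally show "emeasure (distr (PiM I ?M) (PiM I ?M) (\<lambda>\<omega>. \<lambda>i\<in>I. h i (\<omega> i))) (prod_emb I ?M J (Pi\<^sub>E J F))
        = (\<Prod>j\<in>J. emeasure (?M j) (F j))" .
  qed
qed

lemma coord_indep:
  assumes M: "\<And>i. i \<in> I \<Longrightarrow> prob_space (M i)" and I: "I \<noteq> {}"
  shows "prob_space.indep_vars (PiM I M) M (\<lambda>i \<omega>. \<omega> i) I"
proof -
  interpret P: prob_space "PiM I M" by (intro prob_space_PiM M)
  have "P.indep_vars M (\<lambda>i \<omega>. \<omega> i) I \<longleftrightarrow>
      distr (PiM I M) (PiM I M) (\<lambda>x. \<lambda>i\<in>I. x i) = PiM I (\<lambda>i. distr (PiM I M) (M i) (\<lambda>\<omega>. \<omega> i))"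
    using I by (intro P.indep_vars_iff_distr_eq_PiM') (auto intro: measurable_component_singleton)
  also have "distr (PiM I M) (PiM I M) (\<lambda>x. \<lambda>i\<in>I. x i) = distr (PiM I M) (PiM I M) (\<lambda>x. x)"
    by (intro distr_cong) (auto simp: space_PiM PiE_restrict)
  also have "\<dots> = PiM I M" by simp
  also have "PiM I (\<lambda>i. distr (PiM I M) (M i) (\<lambda>\<omega>. \<omega> i)) = PiM I M"
    using M by (intro PiM_cong refl distr_PiM_component) auto
  finally show ?thesis by simp
qed


lemma meas_PiM_UNIV:
  assumes "\<And>i. (\<lambda>\<omega>. f \<omega> i) \<in> measurable N (M i)"
  shows "f \<in> measurable N (PiM UNIV M)"
proof -
  have "(\<lambda>\<omega>. \<lambda>i\<in>UNIV. f \<omega> i) \<in> measurable N (PiM UNIV M)"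
    using assms by (intro measurable_restrict) auto
  moreover have "(\<lambda>\<omega>. \<lambda>i\<in>UNIV. f \<omega> i) = f" by (simp add: fun_eq_iff)
  ultimately show ?thesis by simp
qed

lemma comp_pair_meas: "(\<lambda>\<omega>. \<omega> (k,i)) \<in> measurable (PiM I (\<lambda>(x,y). \<nu> x y)) (\<nu> k i)" if "(k,i) \<in> I"
  using measurable_component_singleton[of "(k,i)" I "\<lambda>(x,y). \<nu> x y"] that by simp

lemma curry_PiM:
  fixes \<nu> :: "'k \<Rightarrow> 'm \<Rightarrow> 'a measure"
  assumes \<nu>: "\<And>k m. prob_space (\<nu> k m)"
  shows "distr (PiM UNIV (\<lambda>(k,m). \<nu> k m)) (PiM UNIV (\<lambda>k. PiM UNIV (\<nu> k))) (\<lambda>w k m. w (k,m))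
       = PiM UNIV (\<lambda>k. PiM UNIV (\<nu> k))"
proof -
  define Pf where "Pf = PiM UNIV (\<lambda>(k::'k,m::'m). \<nu> k m)"
  define M' where "M' = (\<lambda>k. PiM UNIV (\<nu> k))"
  interpret Pf: prob_space Pf unfolding Pf_def by (intro prob_space_PiM) (auto simp: \<nu>)
  interpret M': prob_space "M' k" for k unfolding M'_def by (intro prob_space_PiM \<nu>)
  interpret Q: product_prob_space M' UNIV by unfold_locales
  define Y where "Y = (\<lambda>k (w::'k\<times>'m \<Rightarrow> 'a) m. w (k, m))"
  have Ym: "Y k \<in> measurable Pf (M' k)" for k
    unfolding Y_def M'_def Pf_def
    by (intro meas_PiM_UNIV) (auto intro!: comp_pair_meas)
  have cur_m: "(\<lambda>w k m. w (k,m)) \<in> measurable Pf (PiM UNIV M')"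
    by (intro meas_PiM_UNIV) (use Ym in \<open>simp add: Y_def\<close>)
  have Yd: "distr Pf (M' k) (Y k) = M' k" for k
  proof -
    have e: "(\<lambda>\<omega>. \<lambda>n\<in>UNIV. \<omega> (k, n)) = Y k" by (simp add: fun_eq_iff Y_def)
    show ?thesis
      using distr_PiM_reindex[of UNIV "\<lambda>(k,m). \<nu> k m" "\<lambda>m. (k,m)" UNIV] \<nu>
      unfolding e by (auto simp: Pf_def M'_def inj_on_def split: prod.splits)
  qed
  have ci: "Pf.indep_vars (\<lambda>(k,m). \<nu> k m) (\<lambda>i \<omega>. \<omega> i) UNIV"
    unfolding Pf_def by (rule coord_indep) (auto simp: \<nu> split: prod.splits)
  have ir: "Pf.indep_vars (\<lambda>k. PiM ({k} \<times> UNIV) (\<lambda>(k,m). \<nu> k m)) (\<lambda>k \<omega>. \<lambda>i\<in>{k} \<times> UNIV. \<omega> i) UNIV"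
    using Pf.indep_vars_restrict[OF ci, of UNIV "\<lambda>k. {k} \<times> UNIV"]
    by (auto simp: disjoint_family_on_def)
  have Rm: "(\<lambda>z m. z (k,m)) \<in> measurable (PiM ({k} \<times> UNIV) (\<lambda>(k,m). \<nu> k m)) (M' k)" for k
    unfolding M'_def
    by (intro meas_PiM_UNIV) (auto intro!: comp_pair_meas)
  have "Pf.indep_vars M' (\<lambda>k \<omega>. (\<lambda>z m. z (k,m)) (\<lambda>i\<in>{k} \<times> UNIV. \<omega> i)) UNIV"
    by (rule Pf.indep_vars_compose2[OF ir Rm])
  then have indY: "Pf.indep_vars M' Y UNIV"
    by (simp add: Y_def)
  show ?thesis
    unfolding Pf_def[symmetric] M'_def[symmetric]
  proof (rule Q.PiM_eq)
    show "sets (distr Pf (PiM UNIV M') (\<lambda>w k m. w (k, m))) = sets (PiM UNIV M')" by simp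
  next
    fix J F assume J: "finite J" "J \<subseteq> (UNIV::'k set)" and F: "\<And>j. j \<in> J \<Longrightarrow> F j \<in> sets (M' j)"
    have pe: "prod_emb UNIV M' J (Pi\<^sub>E J F) \<in> sets (PiM UNIV M')"
      using J F by (intro sets_PiM_I) auto
    have pre: "(\<lambda>w k m. w (k,m)) -` prod_emb UNIV M' J (Pi\<^sub>E J F) \<inter> space Pf
        = (if J = {} then space Pf else (\<Inter>j\<in>J. Y j -` F j \<inter> space Pf))"
      using measurable_space[OF cur_m] by (auto simp: prod_emb_def PiE_iff Y_def space_PiM restrict_def fun_eq_iff extensional_def)
    have "emeasure (distr Pf (PiM UNIV M') (\<lambda>w k m. w (k,m))) (prod_emb UNIV M' J (Pi\<^sub>E J F))
        = emeasure Pf ((\<lambda>w k m. w (k,m)) -` prod_emb UNIV M' J (Pi\<^sub>E J F) \<inter> space Pf)"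
      using pe cur_m by (simp add: emeasure_distr)
    also have "\<dots> = (\<Prod>j\<in>J. emeasure (M' j) (F j))"
    proof (cases "J = {}")
      case True then show ?thesis using pre by (simp add: Pf.emeasure_space_1)
    next
      case False
      have "emeasure Pf (\<Inter>j\<in>J. Y j -` F j \<inter> space Pf) = ennreal (Pf.prob (\<Inter>j\<in>J. Y j -` F j \<inter> space Pf))"
        by (simp add: Pf.emeasure_eq_measure)
      also have "Pf.prob (\<Inter>j\<in>J. Y j -` F j \<inter> space Pf) = (\<Prod>j\<in>J. Pf.prob (Y j -` F j \<inter> space Pf))"
        using False J F by (intro Pf.indep_varsD[OF indY]) auto
      also have "ennreal (\<Prod>j\<in>J. Pf.prob (Y j -` F j \<inter> space Pf)) = (\<Prod>j\<in>J. emeasure Pf (Y j -` F j \<inter> space Pf))"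
        by (simp add: Pf.emeasure_eq_measure prod_ennreal)
      also have "\<dots> = (\<Prod>j\<in>J. emeasure (M' j) (F j))"
      proof (intro prod.cong refl)
        fix j assume "j \<in> J"
        then have "emeasure Pf (Y j -` F j \<inter> space Pf) = emeasure (distr Pf (M' j) (Y j)) (F j)"
          using F Ym by (subst emeasure_distr) auto
        then show "emeasure Pf (Y j -` F j \<inter> space Pf) = emeasure (M' j) (F j)" by (simp add: Yd)
      qed
      finally show ?thesis using pre False by simp
    qed
    finally show "emeasure (distr Pf (PiM UNIV M') (\<lambda>w k m. w (k,m))) (prod_emb UNIV M' J (Pi\<^sub>E J F))
        = (\<Prod>j\<in>J. emeasure (M' j) (F j))" .
  qed
qed


lemma sw_meas_gen:
  fixes \<nu> :: "'k \<Rightarrow> 'k \<Rightarrow> 'a measure"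
  assumes sym: "\<And>k m. \<nu> k m = \<nu> m k"
  shows "(\<lambda>Y k m. Y m k) \<in> measurable (PiM UNIV (\<lambda>k. PiM UNIV (\<nu> k))) (PiM UNIV (\<lambda>k. PiM UNIV (\<nu> k)))"
proof (intro meas_PiM_UNIV)
  fix k m :: 'k
  have "(\<lambda>Y. Y m) \<in> measurable (PiM UNIV (\<lambda>k. PiM UNIV (\<nu> k))) (PiM UNIV (\<nu> m))"
    by (rule measurable_component_singleton) simp
  moreover have "(\<lambda>Z. Z k) \<in> measurable (PiM UNIV (\<nu> m)) (\<nu> m k)"
    by (rule measurable_component_singleton) simp
  ultimately have "(\<lambda>Y. Y m k) \<in> measurable (PiM UNIV (\<lambda>k. PiM UNIV (\<nu> k))) (\<nu> m k)"
    by (rule measurable_compose)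
  then show "(\<lambda>Y. Y m k) \<in> measurable (PiM UNIV (\<lambda>k. PiM UNIV (\<nu> k))) (\<nu> k m)"
    using sym[of k m] by simp
qed

lemma swap_PiM:
  fixes \<nu> :: "'k \<Rightarrow> 'k \<Rightarrow> 'a measure"
  assumes \<nu>: "\<And>k m. prob_space (\<nu> k m)" and sym: "\<And>k m. \<nu> k m = \<nu> m k"
  shows "distr (PiM UNIV (\<lambda>k. PiM UNIV (\<nu> k))) (PiM UNIV (\<lambda>k. PiM UNIV (\<nu> k))) (\<lambda>Y k m. Y m k)
       = PiM UNIV (\<lambda>k. PiM UNIV (\<nu> k))"
proof -
  define Pf where "Pf = PiM UNIV (\<lambda>(k::'k,m::'k). \<nu> k m)"
  define Q where "Q = PiM UNIV (\<lambda>k. PiM UNIV (\<nu> k))"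
  define cur where "cur = (\<lambda>(w::'k\<times>'k\<Rightarrow>'a) k m. w (k,m))"
  define fl where "fl = (\<lambda>(w::'k\<times>'k\<Rightarrow>'a) i. w (prod.swap i))"
  define sw where "sw = (\<lambda>(Y::'k\<Rightarrow>'k\<Rightarrow>'a) k m. Y m k)"
  have L: "distr Pf Q cur = Q"
    unfolding Pf_def Q_def cur_def by (rule curry_PiM[OF \<nu>])
  have cur_m: "cur \<in> measurable Pf Q"
    unfolding cur_def Pf_def Q_def
    by (intro meas_PiM_UNIV comp_pair_meas) auto
  have fl_eq: "(\<lambda>w. \<lambda>i\<in>UNIV. w (prod.swap i)) = fl" by (simp add: fl_def fun_eq_iff)
  have fld: "distr Pf Pf fl = Pf"
  proof -
    have "distr Pf (PiM UNIV (\<lambda>i. (\<lambda>(k,m). \<nu> k m) (prod.swap i))) (\<lambda>w. \<lambda>i\<in>UNIV. w (prod.swap i))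
        = PiM UNIV (\<lambda>i. (\<lambda>(k,m). \<nu> k m) (prod.swap i))"
      unfolding Pf_def by (rule distr_PiM_reindex) (auto simp: \<nu> split: prod.splits)
    moreover have "PiM UNIV (\<lambda>i. (\<lambda>(k,m). \<nu> k m) (prod.swap i)) = Pf"
      unfolding Pf_def by (intro PiM_cong refl) (clarsimp split: prod.splits, rule sym)
    ultimately show ?thesis unfolding fl_eq by simp
  qed
  have fl_m: "fl \<in> measurable Pf Pf"
    unfolding fl_def Pf_def
  proof (intro meas_PiM_UNIV)
    fix i :: "'k \<times> 'k"
    obtain k m where i: "i = (k,m)" by (cases i)
    show "(\<lambda>w. w (prod.swap i)) \<in> measurable (PiM UNIV (\<lambda>(k,m). \<nu> k m)) ((\<lambda>(k,m). \<nu> k m) i)"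
      unfolding i using comp_pair_meas[of m k UNIV \<nu>] sym[of m k] by simp
  qed
  have sw_m: "sw \<in> measurable Q Q"
    unfolding sw_def Q_def by (rule sw_meas_gen[OF sym])
  have comp: "sw \<circ> cur = cur \<circ> fl" by (simp add: sw_def cur_def fl_def fun_eq_iff)
  have "distr Q Q sw = distr (distr Pf Q cur) Q sw" by (simp add: L)
  also have "\<dots> = distr Pf Q (sw \<circ> cur)" by (rule distr_distr[OF sw_m cur_m])
  also have "\<dots> = distr Pf Q (cur \<circ> fl)" by (simp add: comp)
  also have "\<dots> = distr (distr Pf Pf fl) Q cur" by (rule distr_distr[OF cur_m fl_m, symmetric])
  also have "\<dots> = Q" by (simp add: fld L)
  finally show ?thesis unfolding Q_def sw_def .
qed

locale gw_setup =
  fixes p :: "nat pmf" and \<mu> :: "nat \<Rightarrow> nat \<Rightarrow> real measure"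
  assumes mu_prob: "\<And>k m. 1 \<le> k \<Longrightarrow> 1 \<le> m \<Longrightarrow> prob_space (\<mu> k m)"
    and mu_borel: "\<And>k m. 1 \<le> k \<Longrightarrow> 1 \<le> m \<Longrightarrow> sets (\<mu> k m) = sets borel"
    and mu_sym: "\<And>k m. 1 \<le> k \<Longrightarrow> 1 \<le> m \<Longrightarrow> \<mu> k m = \<mu> m k"
begin

lemma nu_prob: "prob_space (mu_ext \<mu> k m)"
  by (auto simp: mu_ext_def mu_prob intro: prob_space_return)

lemma nu_sets: "sets (mu_ext \<mu> k m) = sets borel"
  by (auto simp: mu_ext_def mu_borel)

lemma nu_sym: "mu_ext \<mu> k m = mu_ext \<mu> m k"
proof (cases "1 \<le> k \<and> 1 \<le> m")
  case True then show ?thesis using mu_sym[of k m] by (simp add: mu_ext_def)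
next
  case False then show ?thesis by (auto simp: mu_ext_def)
qed

definition "QQ = PiM UNIV (\<lambda>k. PiM UNIV (\<lambda>m. mu_ext \<mu> k m))"
definition "PA = PiM (UNIV :: nat list set) (\<lambda>_. measure_pmf p)"
definition "PB = PiM (UNIV :: nat list set) (\<lambda>_. QQ)"

lemma gw_eq: "gw_space p \<mu> = PA \<Otimes>\<^sub>M PB"
  by (simp add: gw_space_def PA_def PB_def QQ_def)

lemma QQ_prob: "prob_space QQ"
  unfolding QQ_def by (intro prob_space_PiM nu_prob)

lemma PA_prob: "prob_space PA"
  unfolding PA_def by (intro prob_space_PiM prob_space_measure_pmf)

lemma PB_prob: "prob_space PB"
  unfolding PB_def by (intro prob_space_PiM QQ_prob)

lemma gw_prob: "prob_space (gw_space p \<mu>)"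
  unfolding gw_eq using PA_prob PB_prob by (intro prob_space_pair)

lemma meas_NA: "(\<lambda>N. N x) \<in> measurable PA (count_space UNIV)"
proof -
  have "(\<lambda>N. N x) \<in> measurable PA (measure_pmf p)"
    unfolding PA_def by (rule measurable_component_singleton) simp
  moreover have "measurable PA (measure_pmf p) = measurable PA (count_space UNIV)"
    by (rule measurable_cong_sets) (simp_all add: sets_measure_pmf_count_space)
  ultimately show ?thesis by simp
qed

lemma meas_XB: "(\<lambda>X. X x k m) \<in> borel_measurable PB"
proof -
  have "(\<lambda>X. X x) \<in> measurable PB QQ"
    unfolding PB_def by (rule measurable_component_singleton) simp
  moreover have "(\<lambda>Y. Y k) \<in> measurable QQ (PiM UNIV (\<lambda>m. mu_ext \<mu> k m))"
    unfolding QQ_def by (rule measurable_component_singleton) simp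
  moreover have "(\<lambda>Z. Z m) \<in> measurable (PiM UNIV (\<lambda>m. mu_ext \<mu> k m)) (mu_ext \<mu> k m)"
    by (rule measurable_component_singleton) simp
  ultimately have "(\<lambda>X. X x k m) \<in> measurable PB (mu_ext \<mu> k m)"
    by (rule measurable_compose[OF measurable_compose])
  moreover have "measurable PB (mu_ext \<mu> k m) = measurable PB borel"
    by (rule measurable_cong_sets) (simp_all add: nu_sets)
  ultimately show ?thesis by simp
qed

lemma TA_pres: "distr PA PA TA = PA"
proof -
  have e: "(\<lambda>\<omega>. \<lambda>n\<in>UNIV. \<omega> (lpi n)) = TA" by (simp add: TA_def fun_eq_iff)
  show ?thesis
    using distr_PiM_reindex[of UNIV "\<lambda>_. measure_pmf p" lpi UNIV] inj_pi
    unfolding e PA_def by (simp add: prob_space_measure_pmf)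
qed

lemma TA_meas: "TA \<in> measurable PA PA"
  unfolding TA_def by (subst (2) PA_def) (intro meas_PiM_UNIV, simp add: PA_def)

definition "Rm = (\<lambda>(Xi::nat list \<Rightarrow> nat \<Rightarrow> nat \<Rightarrow> real) c. Xi (rho c))"
definition "hh = (\<lambda>(c::nat list) (Y::nat \<Rightarrow> nat \<Rightarrow> real). if c = [0] then (\<lambda>k m. Y m k) else Y)"
definition "Hm = (\<lambda>(Y::nat list \<Rightarrow> nat \<Rightarrow> nat \<Rightarrow> real) c. hh c (Y c))"

lemma TB_eq: "TB = Hm \<circ> Rm"
proof (rule ext)
  fix Xi :: "nat list \<Rightarrow> nat \<Rightarrow> nat \<Rightarrow> real"
  show "TB Xi = (Hm \<circ> Rm) Xi"
    unfolding TB_def Hm_def Rm_def hh_def comp_def by (rule ext) (simp add: rho_def)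
qed

lemma Rm_m: "Rm \<in> measurable PB PB"
proof -
  have "(\<lambda>Xi. Xi (rho c)) \<in> measurable PB QQ" for c
    unfolding PB_def by (rule measurable_component_singleton) simp
  then have "Rm \<in> measurable PB (PiM UNIV (\<lambda>_. QQ))"
    unfolding Rm_def by (intro meas_PiM_UNIV)
  then show ?thesis by (simp add: PB_def)
qed

lemma Rd: "distr PB PB Rm = PB"
proof -
  have e: "(\<lambda>\<omega>. \<lambda>n\<in>UNIV. \<omega> (rho n)) = Rm" by (simp add: Rm_def fun_eq_iff)
  show ?thesis
    using distr_PiM_reindex[of UNIV "\<lambda>_. QQ" rho UNIV] inj_rho QQ_prob
    unfolding e PB_def by simp
qed

lemma sw_pres: "distr QQ QQ (\<lambda>Y k m. Y m k) = QQ"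
  unfolding QQ_def by (rule swap_PiM[OF nu_prob nu_sym])

lemma sw_m: "(\<lambda>(Y::nat \<Rightarrow> nat \<Rightarrow> real) k m. Y m k) \<in> measurable QQ QQ"
  unfolding QQ_def by (rule sw_meas_gen[OF nu_sym])

lemma hh_m: "hh c \<in> measurable QQ QQ"
proof (cases "c = [0]")
  case True then show ?thesis using sw_m by (simp add: hh_def)
next
  case False
  then have "hh c = (\<lambda>Y. Y)" by (simp add: hh_def fun_eq_iff)
  then show ?thesis by simp
qed

lemma hh_d: "distr QQ QQ (hh c) = QQ"
proof (cases "c = [0]")
  case True then show ?thesis using sw_pres by (simp add: hh_def)
next
  case False
  then have "hh c = (\<lambda>Y. Y)" by (simp add: hh_def fun_eq_iff)
  then show ?thesis by simp
qed

lemma Hm_m: "Hm \<in> measurable PB PB"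
proof -
  have "(\<lambda>Y. Y c) \<in> measurable PB QQ" for c
    unfolding PB_def by (rule measurable_component_singleton) simp
  then have "(\<lambda>Y. hh c (Y c)) \<in> measurable PB QQ" for c
    by (rule measurable_compose[OF _ hh_m])
  then have "Hm \<in> measurable PB (PiM UNIV (\<lambda>_. QQ))"
    unfolding Hm_def by (intro meas_PiM_UNIV)
  then show ?thesis by (simp add: PB_def)
qed

lemma Hd: "distr PB PB Hm = PB"
proof -
  have e2: "(\<lambda>\<omega>. \<lambda>i\<in>UNIV. hh i (\<omega> i)) = Hm" by (simp add: Hm_def fun_eq_iff)
  have "distr (PiM UNIV (\<lambda>_. QQ)) (PiM UNIV (\<lambda>_. QQ)) (\<lambda>\<omega>. \<lambda>i\<in>UNIV. hh i (\<omega> i)) = PiM UNIV (\<lambda>_. QQ)"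
    using QQ_prob hh_m hh_d by (intro PiM_componentwise) auto
  then show ?thesis unfolding e2 PB_def .
qed

lemma TB_meas: "TB \<in> measurable PB PB"
  unfolding TB_eq by (rule measurable_comp[OF Rm_m Hm_m])

lemma TB_pres: "distr PB PB TB = PB"
proof -
  have "distr (distr PB PB Rm) PB Hm = distr PB PB (Hm \<circ> Rm)"
    by (rule distr_distr[OF Hm_m Rm_m])
  then have "distr PB PB (Hm \<circ> Rm) = PB" by (simp only: Rd Hd)
  then show ?thesis by (simp only: TB_eq)
qed

definition "Tm = (\<lambda>\<omega>. (TA (fst \<omega>), TB (snd \<omega>)))"

lemma T_pres: "distr (gw_space p \<mu>) (gw_space p \<mu>) Tm = gw_space p \<mu>"
proof -
  interpret B: prob_space PB by (rule PB_prob)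
  have "distr PA PA TA \<Otimes>\<^sub>M distr PB PB TB = distr (PA \<Otimes>\<^sub>M PB) (PA \<Otimes>\<^sub>M PB) (\<lambda>(x, y). (TA x, TB y))"
    using TA_meas TB_meas TB_pres B.sigma_finite_measure_axioms by (intro pair_measure_distr) auto
  then show ?thesis
    unfolding gw_eq Tm_def using TA_pres TB_pres by (simp add: case_prod_beta')
qed

lemma T_meas: "Tm \<in> measurable (gw_space p \<mu>) (gw_space p \<mu>)"
  unfolding gw_eq Tm_def
  by (intro measurable_Pair measurable_compose[OF measurable_fst TA_meas] measurable_compose[OF measurable_snd TB_meas])

lemma meas_env_gw: "meas_env (gw_space p \<mu>) fst snd"
  unfolding gw_eq
  by (rule meas_env.intro) (auto intro: measurable_compose[OF measurable_fst meas_NA] measurable_compose[OF measurable_snd meas_XB])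

end


context gw_setup
begin

lemma ennreal_meas_nu: "(\<lambda>x. ennreal x) \<in> borel_measurable (mu_ext \<mu> k m)"
proof -
  have "measurable (mu_ext \<mu> k m) (borel :: ennreal measure) = measurable borel borel"
    by (rule measurable_cong_sets) (simp_all add: nu_sets)
  then show ?thesis by simp
qed

lemma int_step:
  assumes M: "\<And>i. prob_space (M i)" and f: "f \<in> borel_measurable (M i)"
  shows "(\<integral>\<^sup>+Z. f (Z i) \<partial>PiM UNIV M) = (\<integral>\<^sup>+x. f x \<partial>M i)"
proof -
  have d: "distr (PiM UNIV M) (M i) (\<lambda>Z. Z i) = M i"
    using M by (intro distr_PiM_component) auto
  have "(\<integral>\<^sup>+x. f x \<partial>M i) = (\<integral>\<^sup>+x. f x \<partial>distr (PiM UNIV M) (M i) (\<lambda>Z. Z i))" by (simp add: d)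
  also have "\<dots> = (\<integral>\<^sup>+Z. f (Z i) \<partial>PiM UNIV M)"
    using f d by (intro nn_integral_distr) (auto intro: measurable_component_singleton)
  finally show ?thesis by simp
qed

lemma int_XB: "(\<integral>\<^sup>+X. ennreal (X c k m) \<partial>PB) = (\<integral>\<^sup>+x. ennreal x \<partial>mu_ext \<mu> k m)"
proof -
  have m3: "(\<lambda>Z. ennreal (Z m)) \<in> borel_measurable (PiM UNIV (\<lambda>m. mu_ext \<mu> k m))"
    by (rule measurable_compose[OF measurable_component_singleton[of m UNIV "\<lambda>m. mu_ext \<mu> k m"] ennreal_meas_nu]) simp
  have m2: "(\<lambda>Y. ennreal (Y k m)) \<in> borel_measurable QQ"
    unfolding QQ_def by (rule measurable_compose[OF measurable_component_singleton[of k UNIV "\<lambda>k. PiM UNIV (\<lambda>m. mu_ext \<mu> k m)"] m3]) simp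
  have "(\<integral>\<^sup>+X. ennreal (X c k m) \<partial>PB) = (\<integral>\<^sup>+Y. ennreal (Y k m) \<partial>QQ)"
    unfolding PB_def by (rule int_step[OF QQ_prob m2])
  also have "\<dots> = (\<integral>\<^sup>+Z. ennreal (Z m) \<partial>PiM UNIV (\<lambda>m. mu_ext \<mu> k m))"
    unfolding QQ_def using int_step[of "\<lambda>k. PiM UNIV (\<lambda>m. mu_ext \<mu> k m)" "\<lambda>Y. ennreal (Y m)" k] m3
    by (simp add: prob_space_PiM nu_prob)
  also have "\<dots> = (\<integral>\<^sup>+x. ennreal x \<partial>mu_ext \<mu> k m)"
    by (rule int_step[OF nu_prob ennreal_meas_nu])
  finally show ?thesis .
qed

lemma pair_coords_distr:
  "distr PA (measure_pmf p \<Otimes>\<^sub>M measure_pmf p) (\<lambda>N. (N [], N [0])) = measure_pmf p \<Otimes>\<^sub>M measure_pmf p"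
proof -
  interpret A: prob_space PA by (rule PA_prob)
  have ci: "A.indep_vars (\<lambda>_. measure_pmf p) (\<lambda>i \<omega>. \<omega> i) UNIV"
    unfolding PA_def by (rule coord_indep) (auto intro: prob_space_measure_pmf)
  have "A.indep_var (PiM {[]} (\<lambda>_. measure_pmf p)) (\<lambda>\<omega>. restrict (\<lambda>i. \<omega> i) {[]})
      (PiM {[0]} (\<lambda>_. measure_pmf p)) (\<lambda>\<omega>. restrict (\<lambda>i. \<omega> i) {[0]})"
    by (rule A.indep_var_restrict[OF ci]) auto
  then have "A.indep_var (measure_pmf p) ((\<lambda>f. f []) \<circ> (\<lambda>\<omega>. restrict (\<lambda>i. \<omega> i) {[]}))
      (measure_pmf p) ((\<lambda>f. f [0]) \<circ> (\<lambda>\<omega>. restrict (\<lambda>i. \<omega> i) {[0]}))"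
    by (rule A.indep_var_compose) (auto intro: measurable_component_singleton)
  then have iv: "A.indep_var (measure_pmf p) (\<lambda>N. N []) (measure_pmf p) (\<lambda>N. N [0])"
    by (simp add: comp_def)
  have d1: "distr PA (measure_pmf p) (\<lambda>N. N x) = measure_pmf p" for x
    unfolding PA_def by (intro distr_PiM_component) (auto intro: prob_space_measure_pmf)
  show ?thesis
    using iv unfolding A.indep_var_distribution_eq by (simp add: d1)
qed

lemma suminf_shift0: "f 0 = 0 \<Longrightarrow> (\<Sum>n. f n :: ennreal) = (\<Sum>n. f (Suc n))"
proof -
  assume f0: "f 0 = 0"
  have "(\<lambda>n. f (Suc n)) sums (\<Sum>n. f (Suc n))" by (rule summable_sums) simp
  then have "f sums ((\<Sum>n. f (Suc n)) + f 0)" by (rule sums_Suc)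
  then show ?thesis using f0 by (simp add: sums_iff)
qed

definition "gk k m = (\<integral>\<^sup>+x. ennreal x \<partial>mu_ext \<mu> k m)"

lemma sets_pp: "sets (measure_pmf p \<Otimes>\<^sub>M measure_pmf p) = sets (count_space UNIV)"
proof -
  have "sets (measure_pmf p \<Otimes>\<^sub>M measure_pmf p) = sets (count_space (UNIV::nat set) \<Otimes>\<^sub>M count_space (UNIV::nat set))"
    by (intro sets_pair_measure_cong) (simp_all add: sets_measure_pmf_count_space)
  also have "\<dots> = sets (count_space (UNIV \<times> UNIV))"
    by (subst pair_measure_countable) auto
  finally show ?thesis by simp
qed

lemma meas_pp: "f \<in> borel_measurable (measure_pmf p \<Otimes>\<^sub>M measure_pmf p)"
  by (subst measurable_cong_sets[OF sets_pp refl]) (rule borel_measurable_count_space)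

lemma int_pmf_nat: "(\<integral>\<^sup>+x. f x \<partial>measure_pmf p) = (\<Sum>k. ennreal (pmf p k) * f k)"
  by (simp add: nn_integral_measure_pmf nn_integral_count_space_nat)

lemma int_xi0_sum:
  "(\<integral>\<^sup>+\<omega>. ennreal (xi0 (fst \<omega>) (snd \<omega>)) \<partial>gw_space p \<mu>) =
     (\<Sum>k. ennreal (pmf p k) * (\<Sum>m. ennreal (pmf p m) * gk k m))"
proof -
  interpret A: prob_space PA by (rule PA_prob)
  interpret B: prob_space PB by (rule PB_prob)
  interpret P: prob_space "measure_pmf p" by (rule prob_space_measure_pmf)
  interpret E: meas_env "gw_space p \<mu>" fst snd by (rule meas_env_gw)
  have fm: "(\<lambda>\<omega>. ennreal (xi0 (fst \<omega>) (snd \<omega>))) \<in> borel_measurable (PA \<Otimes>\<^sub>M PB)"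
    using measurable_compose[OF E.meas_xi0 measurable_ennreal] by (simp add: gw_eq)
  have "(\<integral>\<^sup>+\<omega>. ennreal (xi0 (fst \<omega>) (snd \<omega>)) \<partial>gw_space p \<mu>) =
      (\<integral>\<^sup>+N. \<integral>\<^sup>+X. ennreal (xi0 N X) \<partial>PB \<partial>PA)"
    unfolding gw_eq using B.nn_integral_fst[OF fm] by simp
  also have "\<dots> = (\<integral>\<^sup>+N. gk (N []) (N [0]) \<partial>PA)"
    by (intro nn_integral_cong) (simp add: xi0_def int_XB gk_def)
  also have "\<dots> = (\<integral>\<^sup>+z. gk (fst z) (snd z) \<partial>distr PA (measure_pmf p \<Otimes>\<^sub>M measure_pmf p) (\<lambda>N. (N [], N [0])))"
  proof -
    have pm: "(\<lambda>N. (N [], N [0])) \<in> measurable PA (measure_pmf p \<Otimes>\<^sub>M measure_pmf p)"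
      unfolding PA_def by (intro measurable_Pair measurable_component_singleton) auto
    show ?thesis
      by (subst nn_integral_distr[OF pm]) (auto simp: pair_coords_distr meas_pp)
  qed
  also have "\<dots> = (\<integral>\<^sup>+z. gk (fst z) (snd z) \<partial>(measure_pmf p \<Otimes>\<^sub>M measure_pmf p))"
    by (simp add: pair_coords_distr)
  also have "\<dots> = (\<integral>\<^sup>+k. \<integral>\<^sup>+m. gk k m \<partial>measure_pmf p \<partial>measure_pmf p)"
    using measure_pmf.nn_integral_fst[OF meas_pp, of "\<lambda>z. gk (fst z) (snd z)"] by simp
  also have "\<dots> = (\<Sum>k. ennreal (pmf p k) * (\<Sum>m. ennreal (pmf p m) * gk k m))"
    by (simp add: int_pmf_nat)
  finally show ?thesis .
qed

lemma int_xi0_gamma: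
  assumes p0: "pmf p 0 = 0"
  shows "(\<integral>\<^sup>+\<omega>. ennreal (xi0 (fst \<omega>) (snd \<omega>)) \<partial>gw_space p \<mu>) = gamma_tot p \<mu>"
proof -
  have "(\<Sum>k. ennreal (pmf p k) * (\<Sum>m. ennreal (pmf p m) * gk k m)) =
      (\<Sum>k. ennreal (pmf p (Suc k)) * (\<Sum>m. ennreal (pmf p m) * gk (Suc k) m))"
    using p0 by (intro suminf_shift0) simp
  also have "\<dots> = (\<Sum>k. ennreal (pmf p (Suc k)) * (\<Sum>m. ennreal (pmf p (Suc m)) * gk (Suc k) (Suc m)))"
    using p0 by (subst suminf_shift0) simp_all
  also have "\<dots> = gamma_tot p \<mu>"
    unfolding gamma_tot_def
    by (intro suminf_cong) (simp add: gk_def gamma_km_def mu_ext_def ennreal_mult mult.assoc)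
  finally show ?thesis by (simp add: int_xi0_sum)
qed

end


lemma indep_int:
  fixes f g :: "('i \<Rightarrow> 'a) \<Rightarrow> ennreal"
  assumes M: "\<And>i. i \<in> I \<Longrightarrow> prob_space (M i)" and I: "I \<noteq> {}"
  and S: "S \<subseteq> I" "S' \<subseteq> I" "S \<inter> S' = {}"
  and fm: "f \<in> borel_measurable (PiM I M)" and gm: "g \<in> borel_measurable (PiM I M)"
  and fdep: "\<And>\<omega> \<omega>'. \<omega> \<in> space (PiM I M) \<Longrightarrow> \<omega>' \<in> space (PiM I M) \<Longrightarrow> (\<And>i. i \<in> S \<Longrightarrow> \<omega> i = \<omega>' i) \<Longrightarrow> f \<omega> = f \<omega>'"
  and gdep: "\<And>\<omega> \<omega>'. \<omega> \<in> space (PiM I M) \<Longrightarrow> \<omega>' \<in> space (PiM I M) \<Longrightarrow> (\<And>i. i \<in> S' \<Longrightarrow> \<omega> i = \<omega>' i) \<Longrightarrow> g \<omega> = g \<omega>'"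
  shows "(\<integral>\<^sup>+\<omega>. f \<omega> * g \<omega> \<partial>PiM I M) = (\<integral>\<^sup>+\<omega>. f \<omega> \<partial>PiM I M) * (\<integral>\<^sup>+\<omega>. g \<omega> \<partial>PiM I M)"
proof -
  interpret P: prob_space "PiM I M" by (intro prob_space_PiM M)
  obtain \<omega>0 where \<omega>0: "\<omega>0 \<in> space (PiM I M)" using P.not_empty by blast
  define ext where "ext T y = (\<lambda>i\<in>I. if i \<in> T then y i else \<omega>0 i)" for T and y :: "'i \<Rightarrow> 'a"
  have ext_m: "ext T \<in> measurable (PiM T M) (PiM I M)" if T: "T \<subseteq> I" for T
    unfolding ext_def
  proof (intro measurable_restrict)
    fix i assume i: "i \<in> I"
    show "(\<lambda>y. if i \<in> T then y i else \<omega>0 i) \<in> measurable (PiM T M) (M i)"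
    proof (cases "i \<in> T")
      case True then show ?thesis by (simp add: measurable_component_singleton)
    next
      case False
      have "\<omega>0 i \<in> space (M i)" using \<omega>0 i by (auto simp: space_PiM)
      then show ?thesis using False by simp
    qed
  qed
  have r_m: "(\<lambda>\<omega>. restrict \<omega> T) \<in> measurable (PiM I M) (PiM T M)" if "T \<subseteq> I" for T
    using that by (rule measurable_restrict_subset)
  have ext_eq: "\<omega> i = ext T (restrict \<omega> T) i" if "\<omega> \<in> space (PiM I M)" "i \<in> T" "T \<subseteq> I" for \<omega> T i
    using that by (auto simp: ext_def)
  define f1 where "f1 = f \<circ> ext S"
  define g1 where "g1 = g \<circ> ext S'"
  have f1m: "f1 \<in> borel_measurable (PiM S M)" unfolding f1_def by (rule measurable_comp[OF ext_m[OF S(1)] fm])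
  have g1m: "g1 \<in> borel_measurable (PiM S' M)" unfolding g1_def by (rule measurable_comp[OF ext_m[OF S(2)] gm])
  have f_eq: "f \<omega> = f1 (restrict \<omega> S)" if "\<omega> \<in> space (PiM I M)" for \<omega>
    unfolding f1_def comp_def
    using that measurable_space[OF ext_m[OF S(1)] measurable_space[OF r_m[OF S(1)] that]] ext_eq[OF that _ S(1)]
    by (intro fdep) auto
  have g_eq: "g \<omega> = g1 (restrict \<omega> S')" if "\<omega> \<in> space (PiM I M)" for \<omega>
    unfolding g1_def comp_def
    using that measurable_space[OF ext_m[OF S(2)] measurable_space[OF r_m[OF S(2)] that]] ext_eq[OF that _ S(2)]
    by (intro gdep) auto
  have iv: "P.indep_var (PiM S M) (\<lambda>\<omega>. restrict (\<lambda>i. \<omega> i) S) (PiM S' M) (\<lambda>\<omega>. restrict (\<lambda>i. \<omega> i) S')"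
    by (rule P.indep_var_restrict[OF coord_indep[OF M I] S(3) S(1) S(2)])
  define D1 where "D1 = distr (PiM I M) (PiM S M) (\<lambda>\<omega>. restrict \<omega> S)"
  define D2 where "D2 = distr (PiM I M) (PiM S' M) (\<lambda>\<omega>. restrict \<omega> S')"
  have dd: "D1 \<Otimes>\<^sub>M D2 = distr (PiM I M) (PiM S M \<Otimes>\<^sub>M PiM S' M) (\<lambda>\<omega>. (restrict \<omega> S, restrict \<omega> S'))"
    using iv unfolding P.indep_var_distribution_eq D1_def D2_def by simp
  interpret D2: prob_space D2 unfolding D2_def by (rule P.prob_space_distr[OF r_m[OF S(2)]])
  have prm: "(\<lambda>\<omega>. (restrict \<omega> S, restrict \<omega> S')) \<in> measurable (PiM I M) (PiM S M \<Otimes>\<^sub>M PiM S' M)"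
    using r_m S by (intro measurable_Pair) auto
  have hm: "(\<lambda>z. f1 (fst z) * g1 (snd z)) \<in> borel_measurable (D1 \<Otimes>\<^sub>M D2)"
  proof -
    have "(\<lambda>z. f1 (fst z) * g1 (snd z)) \<in> borel_measurable (PiM S M \<Otimes>\<^sub>M PiM S' M)"
      using f1m g1m by measurable
    then show ?thesis by (simp add: dd)
  qed
  have "(\<integral>\<^sup>+\<omega>. f \<omega> * g \<omega> \<partial>PiM I M) = (\<integral>\<^sup>+\<omega>. f1 (restrict \<omega> S) * g1 (restrict \<omega> S') \<partial>PiM I M)"
    by (intro nn_integral_cong) (simp add: f_eq g_eq)
  also have "\<dots> = (\<integral>\<^sup>+z. f1 (fst z) * g1 (snd z) \<partial>(D1 \<Otimes>\<^sub>M D2))"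
    unfolding dd using hm unfolding dd by (subst nn_integral_distr[OF prm]) auto
  also have "\<dots> = (\<integral>\<^sup>+u. \<integral>\<^sup>+v. f1 u * g1 v \<partial>D2 \<partial>D1)"
    using D2.nn_integral_fst[OF hm] by simp
  also have "\<dots> = (\<integral>\<^sup>+u. f1 u * (\<integral>\<^sup>+v. g1 v \<partial>D2) \<partial>D1)"
    using g1m by (intro nn_integral_cong nn_integral_cmult) (simp add: D2_def)
  also have "\<dots> = (\<integral>\<^sup>+u. f1 u \<partial>D1) * (\<integral>\<^sup>+v. g1 v \<partial>D2)"
    using f1m by (intro nn_integral_multc) (simp add: D1_def)
  also have "(\<integral>\<^sup>+u. f1 u \<partial>D1) = (\<integral>\<^sup>+\<omega>. f \<omega> \<partial>PiM I M)"
    unfolding D1_def using f1m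
    by (subst nn_integral_distr[OF r_m[OF S(1)]]) (auto intro!: nn_integral_cong simp: f_eq)
  also have "(\<integral>\<^sup>+v. g1 v \<partial>D2) = (\<integral>\<^sup>+\<omega>. g \<omega> \<partial>PiM I M)"
    unfolding D2_def using g1m
    by (subst nn_integral_distr[OF r_m[OF S(2)]]) (auto intro!: nn_integral_cong simp: g_eq)
  finally show ?thesis .
qed


lemma level_local:
  "x \<noteq> [] \<Longrightarrow> (\<And>ys. N (ys @ x) = N' (ys @ x)) \<Longrightarrow> (\<And>ys. Xi (ys @ x) = Xi' (ys @ x)) \<Longrightarrow>
   cond_level N Xi n x = cond_level N' Xi' n x"
proof (induction n arbitrary: x)
  case 0 then show ?case by simp
next
  case (Suc n)
  have nc: "nchild N x = nchild N' x"
    using Suc.prems(1) Suc.prems(2)[of "[]"] by (simp add: nchild_def)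
  have ed: "cond_edge N Xi (i # x) = cond_edge N' Xi' (i # x)" for i
    using Suc.prems(2)[of "[]"] Suc.prems(2)[of "[i]"] Suc.prems(3)[of "[i]"] by simp
  have lv: "cond_level N Xi n (i # x) = cond_level N' Xi' n (i # x)" for i
  proof (rule Suc.IH)
    fix ys show "N (ys @ i # x) = N' (ys @ i # x)" using Suc.prems(2)[of "ys @ [i]"] by simp
  next
    fix ys show "Xi (ys @ i # x) = Xi' (ys @ i # x)" using Suc.prems(3)[of "ys @ [i]"] by simp
  qed simp
  show ?case by (simp only: cond_level.simps nc ed lv)
qed

lemma eff_local:
  "x \<noteq> [] \<Longrightarrow> (\<And>ys. N (ys @ x) = N' (ys @ x)) \<Longrightarrow> (\<And>ys. Xi (ys @ x) = Xi' (ys @ x)) \<Longrightarrow>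
   eff_cond N Xi x = eff_cond N' Xi' x"
  unfolding eff_cond_def using level_local[of x N N' Xi Xi'] by simp

definition "D0 = {x. \<exists>ys. x = ys @ [0::nat]}"
definition "D1 = {x. \<exists>ys j. x = ys @ [Suc j]}"

lemma D01_disj: "D0 \<inter> D1 = {}"
  by (auto simp: D0_def D1_def)

lemma Nil_notin_D1: "[] \<notin> D1"
  by (auto simp: D1_def)

lemma aF_local:
  "(\<And>x. x \<in> D0 \<Longrightarrow> N x = N' x) \<Longrightarrow> (\<And>x. x \<in> D0 \<Longrightarrow> Xi x = Xi' x) \<Longrightarrow> aF N Xi = aF N' Xi'"
  unfolding aF_def by (rule eff_local) (auto simp: D0_def)

lemma bF_local:
  "N [] = N' [] \<Longrightarrow> (\<And>x. x \<in> D1 \<Longrightarrow> N x = N' x) \<Longrightarrow> (\<And>x. x \<in> D1 \<Longrightarrow> Xi x = Xi' x) \<Longrightarrow> bF N Xi = bF N' Xi'"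
proof -
  assume h0: "N [] = N' []" and hN: "\<And>x. x \<in> D1 \<Longrightarrow> N x = N' x" and hX: "\<And>x. x \<in> D1 \<Longrightarrow> Xi x = Xi' x"
  have e: "eff_cond N Xi [Suc i] = eff_cond N' Xi' [Suc i]" for i
    by (rule eff_local) (auto intro!: hN hX simp: D1_def)
  have c: "cond_edge N Xi [Suc i] = cond_edge N' Xi' [Suc i]" for i
    using h0 hN[of "[Suc i]"] hX[of "[Suc i]"] by (simp add: D1_def)
  show ?thesis unfolding bF_def h0 by (simp only: e c)
qed

lemma bF_finite: "bF N Xi < top"
proof -
  have "bF N Xi \<le> (\<Sum>i<N []. ennreal (cond_edge N Xi [Suc i]))"
    unfolding bF_def by (intro sum_mono ser_le1)
  also have "\<dots> < top" by simp
  finally show ?thesis .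
qed

lemma aF_finite: "aF N Xi < top"
  unfolding aF_def by (rule eff_cond_finite)

definition ind0 :: "ennreal \<Rightarrow> ennreal" where "ind0 z = (if z = 0 then 1 else 0)"

lemma meas_ind0: "f \<in> borel_measurable M \<Longrightarrow> (\<lambda>\<omega>. ind0 (f \<omega>)) \<in> borel_measurable M"
  unfolding ind0_def by measurable

context gw_setup
begin

lemma meas_env_PB: "meas_env PB (\<lambda>_. N) (\<lambda>X. X)"
  by (rule meas_env.intro) (auto simp: meas_XB)

lemma indep_ab:
  "(\<integral>\<^sup>+\<omega>. ind0 (aF (fst \<omega>) (snd \<omega>)) * ind0 (bF (fst \<omega>) (snd \<omega>)) \<partial>gw_space p \<mu>) =
   (\<integral>\<^sup>+\<omega>. ind0 (aF (fst \<omega>) (snd \<omega>)) \<partial>gw_space p \<mu>) * (\<integral>\<^sup>+\<omega>. ind0 (bF (fst \<omega>) (snd \<omega>)) \<partial>gw_space p \<mu>)"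
proof -
  interpret A: prob_space PA by (rule PA_prob)
  interpret B: prob_space PB by (rule PB_prob)
  interpret E: meas_env "gw_space p \<mu>" fst snd by (rule meas_env_gw)
  define ha where "ha N X = ind0 (aF N X)" for N X
  define hb where "hb N X = ind0 (bF N X)" for N X
  have ham: "(\<lambda>\<omega>. ha (fst \<omega>) (snd \<omega>)) \<in> borel_measurable (PA \<Otimes>\<^sub>M PB)"
    unfolding ha_def using meas_ind0[OF E.meas_aF] by (simp add: gw_eq)
  have hbm: "(\<lambda>\<omega>. hb (fst \<omega>) (snd \<omega>)) \<in> borel_measurable (PA \<Otimes>\<^sub>M PB)"
    unfolding hb_def using meas_ind0[OF E.meas_bF] by (simp add: gw_eq)
  have habm: "(\<lambda>\<omega>. ha (fst \<omega>) (snd \<omega>) * hb (fst \<omega>) (snd \<omega>)) \<in> borel_measurable (PA \<Otimes>\<^sub>M PB)"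
    using ham hbm by (rule borel_measurable_times_ennreal)
  have haN: "ha N \<in> borel_measurable PB" for N
  proof -
    interpret EN: meas_env PB "\<lambda>_. N" "\<lambda>X. X" by (rule meas_env_PB)
    show ?thesis unfolding ha_def using meas_ind0[OF EN.meas_aF] by simp
  qed
  have hbN: "hb N \<in> borel_measurable PB" for N
  proof -
    interpret EN: meas_env PB "\<lambda>_. N" "\<lambda>X. X" by (rule meas_env_PB)
    show ?thesis unfolding hb_def using meas_ind0[OF EN.meas_bF] by simp
  qed
  have inner: "(\<integral>\<^sup>+X. ha N X * hb N X \<partial>PB) = (\<integral>\<^sup>+X. ha N X \<partial>PB) * (\<integral>\<^sup>+X. hb N X \<partial>PB)" for N
    unfolding PB_def
  proof (rule indep_int[where S=D0 and S'=D1])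
    show "\<And>i. i \<in> UNIV \<Longrightarrow> prob_space QQ" using QQ_prob by simp
    show "ha N \<in> borel_measurable (PiM UNIV (\<lambda>_. QQ))" using haN by (simp add: PB_def)
    show "hb N \<in> borel_measurable (PiM UNIV (\<lambda>_. QQ))" using hbN by (simp add: PB_def)
    show "D0 \<inter> D1 = {}" by (rule D01_disj)
    fix \<omega> \<omega>' :: "nat list \<Rightarrow> nat \<Rightarrow> nat \<Rightarrow> real"
    show "(\<And>i. i \<in> D0 \<Longrightarrow> \<omega> i = \<omega>' i) \<Longrightarrow> ha N \<omega> = ha N \<omega>'"
      unfolding ha_def by (subst aF_local[of N N \<omega> \<omega>']) auto
    show "(\<And>i. i \<in> D1 \<Longrightarrow> \<omega> i = \<omega>' i) \<Longrightarrow> hb N \<omega> = hb N \<omega>'"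
      unfolding hb_def by (subst bF_local[of N N \<omega> \<omega>']) auto
  qed auto
  define \<alpha> where "\<alpha> N = (\<integral>\<^sup>+X. ha N X \<partial>PB)" for N
  define \<beta> where "\<beta> N = (\<integral>\<^sup>+X. hb N X \<partial>PB)" for N
  have \<alpha>m: "\<alpha> \<in> borel_measurable PA"
    unfolding \<alpha>_def using B.borel_measurable_nn_integral_fst[OF ham] by simp
  have \<beta>m: "\<beta> \<in> borel_measurable PA"
    unfolding \<beta>_def using B.borel_measurable_nn_integral_fst[OF hbm] by simp
  have outer: "(\<integral>\<^sup>+N. \<alpha> N * \<beta> N \<partial>PA) = (\<integral>\<^sup>+N. \<alpha> N \<partial>PA) * (\<integral>\<^sup>+N. \<beta> N \<partial>PA)"
    unfolding PA_def
  proof (rule indep_int[where S=D0 and S'="insert [] D1"])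
    show "\<And>i. i \<in> UNIV \<Longrightarrow> prob_space (measure_pmf p)" by (simp add: prob_space_measure_pmf)
    show "\<alpha> \<in> borel_measurable (PiM UNIV (\<lambda>_. measure_pmf p))" using \<alpha>m by (simp add: PA_def)
    show "\<beta> \<in> borel_measurable (PiM UNIV (\<lambda>_. measure_pmf p))" using \<beta>m by (simp add: PA_def)
    show "D0 \<inter> insert [] D1 = {}" using D01_disj by (auto simp: D0_def)
    fix \<omega> \<omega>' :: "nat list \<Rightarrow> nat"
    show "(\<And>i. i \<in> D0 \<Longrightarrow> \<omega> i = \<omega>' i) \<Longrightarrow> \<alpha> \<omega> = \<alpha> \<omega>'"
      unfolding \<alpha>_def ha_def by (intro nn_integral_cong) (subst aF_local[of \<omega> \<omega>']; auto)
    show "(\<And>i. i \<in> insert [] D1 \<Longrightarrow> \<omega> i = \<omega>' i) \<Longrightarrow> \<beta> \<omega> = \<beta> \<omega>'"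
      unfolding \<beta>_def hb_def by (intro nn_integral_cong) (subst bF_local[of \<omega> \<omega>']; auto)
  qed auto
  have fub: "(\<integral>\<^sup>+\<omega>. h (fst \<omega>) (snd \<omega>) \<partial>gw_space p \<mu>) = (\<integral>\<^sup>+N. \<integral>\<^sup>+X. h N X \<partial>PB \<partial>PA)"
    if "(\<lambda>\<omega>. h (fst \<omega>) (snd \<omega>)) \<in> borel_measurable (PA \<Otimes>\<^sub>M PB)" for h
    unfolding gw_eq using B.nn_integral_fst[OF that] by simp
  have "(\<integral>\<^sup>+\<omega>. ha (fst \<omega>) (snd \<omega>) * hb (fst \<omega>) (snd \<omega>) \<partial>gw_space p \<mu>) = (\<integral>\<^sup>+N. \<alpha> N * \<beta> N \<partial>PA)"
    using fub[of "\<lambda>N X. ha N X * hb N X", OF habm] by (simp add: inner \<alpha>_def \<beta>_def)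
  also have "\<dots> = (\<integral>\<^sup>+\<omega>. ha (fst \<omega>) (snd \<omega>) \<partial>gw_space p \<mu>) * (\<integral>\<^sup>+\<omega>. hb (fst \<omega>) (snd \<omega>) \<partial>gw_space p \<mu>)"
    using outer fub[OF ham] fub[OF hbm] by (simp add: \<alpha>_def \<beta>_def)
  finally show ?thesis by (simp add: ha_def hb_def)
qed

end


context gw_setup
begin

lemma AE_nu_pos:
  assumes mu_pos: "\<And>k m. 1 \<le> k \<Longrightarrow> 1 \<le> m \<Longrightarrow> (AE x in \<mu> k m. 0 < x)"
  shows "AE x in mu_ext \<mu> k m. 0 < (x::real)"
proof (cases "1 \<le> k \<and> 1 \<le> m")
  case True then show ?thesis unfolding mu_ext_def using mu_pos[of k m] by simp
next
  case False
  then have r: "mu_ext \<mu> k m = return borel 1" unfolding mu_ext_def by (rule if_not_P)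
  have mp: "Measurable.pred borel (\<lambda>x::real. 0 < x)" by measurable
  have "AE x in return borel (1::real). 0 < x" by (subst AE_return) (simp_all add: mp)
  then show ?thesis by (subst r)
qed

lemma AE_PB_pos:
  assumes mu_pos: "\<And>k m. 1 \<le> k \<Longrightarrow> 1 \<le> m \<Longrightarrow> (AE x in \<mu> k m. 0 < x)"
  shows "AE X in PB. \<forall>k m. 0 < X [0] k m"
proof -
  have "AE X in PB. 0 < X [0] k m" for k m
  proof -
    have "AE Z in PiM UNIV (\<lambda>m. mu_ext \<mu> k m). 0 < Z m"
      by (rule AE_PiM_component[OF nu_prob _ AE_nu_pos[OF mu_pos]]) auto
    then have "AE Y in QQ. 0 < Y k m"
      unfolding QQ_def
      by (intro AE_PiM_component[where P="\<lambda>Z. 0 < Z m"]) (auto intro: prob_space_PiM nu_prob)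
    then show ?thesis
      unfolding PB_def by (intro AE_PiM_component[where P="\<lambda>Y. 0 < Y k m"]) (auto intro: QQ_prob)
  qed
  then show ?thesis by (simp add: AE_all_countable)
qed

lemma AE_xi0_pos:
  assumes mu_pos: "\<And>k m. 1 \<le> k \<Longrightarrow> 1 \<le> m \<Longrightarrow> (AE x in \<mu> k m. 0 < x)"
  shows "AE \<omega> in gw_space p \<mu>. 0 < xi0 (fst \<omega>) (snd \<omega>)"
proof -
  interpret A: prob_space PA by (rule PA_prob)
  interpret B: prob_space PB by (rule PB_prob)
  interpret PP: pair_prob_space PA PB ..
  interpret E: meas_env "gw_space p \<mu>" fst snd by (rule meas_env_gw)
  have ms: "{x \<in> space (PA \<Otimes>\<^sub>M PB). 0 < xi0 (fst x) (snd x)} \<in> sets (PA \<Otimes>\<^sub>M PB)"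
    using E.meas_xi0 unfolding gw_eq by measurable
  have "AE X in PB. 0 < xi0 N X" for N
  proof -
    have "AE X in PB. \<forall>k m. 0 < X [0] k m" using mu_pos by (rule AE_PB_pos)
    then show ?thesis by eventually_elim (simp add: xi0_def)
  qed
  then have "AE N in PA. AE X in PB. 0 < xi0 (fst (N, X)) (snd (N, X))" by simp
  then show ?thesis unfolding gw_eq by (rule PP.AE_pair_measure[OF ms])
qed

lemma int_T:
  assumes fm: "f \<in> borel_measurable (gw_space p \<mu>)"
  shows "(\<integral>\<^sup>+\<omega>. f (Tm \<omega>) \<partial>gw_space p \<mu>) = (\<integral>\<^sup>+\<omega>. f \<omega> \<partial>gw_space p \<mu>)"
proof -
  have "(\<integral>\<^sup>+\<omega>. f \<omega> \<partial>gw_space p \<mu>) = (\<integral>\<^sup>+\<omega>. f \<omega> \<partial>distr (gw_space p \<mu>) (gw_space p \<mu>) Tm)"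
    by (simp add: T_pres)
  also have "\<dots> = (\<integral>\<^sup>+\<omega>. f (Tm \<omega>) \<partial>gw_space p \<mu>)"
    using fm by (intro nn_integral_distr[OF T_meas]) simp
  finally show ?thesis by simp
qed

lemma key_lt:
  assumes mu_pos: "\<And>k m. 1 \<le> k \<Longrightarrow> 1 \<le> m \<Longrightarrow> (AE x in \<mu> k m. 0 < x)"
    and p0: "pmf p 0 = 0" and gfin: "gamma_tot p \<mu> < top"
  shows "key_expect p \<mu> + key_expect p \<mu> < gamma_tot p \<mu>"
proof -
  interpret E: meas_env "gw_space p \<mu>" fst snd by (rule meas_env_gw)
  interpret G: prob_space "gw_space p \<mu>" by (rule gw_prob)
  let ?M = "gw_space p \<mu>"
  define F where "F \<omega> = Fr (xi0 (fst \<omega>) (snd \<omega>)) (aF (fst \<omega>) (snd \<omega>)) (bF (fst \<omega>) (snd \<omega>))" for \<omega>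
  define H where "H \<omega> = Fr (xi0 (fst \<omega>) (snd \<omega>)) (bF (fst \<omega>) (snd \<omega>)) (aF (fst \<omega>) (snd \<omega>))" for \<omega>
  define X0 where "X0 \<omega> = ennreal (xi0 (fst \<omega>) (snd \<omega>))" for \<omega>
  have Fm: "F \<in> borel_measurable ?M" unfolding F_def by (intro E.meas_Fr E.meas_xi0 E.meas_aF E.meas_bF)
  have Hm: "H \<in> borel_measurable ?M" unfolding H_def by (intro E.meas_Fr E.meas_xi0 E.meas_aF E.meas_bF)
  have X0m: "X0 \<in> borel_measurable ?M" unfolding X0_def using measurable_compose[OF E.meas_xi0 measurable_ennreal] .
  have key: "key_expect p \<mu> = (\<integral>\<^sup>+\<omega>. F \<omega> \<partial>?M)"
    unfolding key_expect_def F_def by (intro nn_integral_cong) (simp add: Fr_def C_T0star_eq C_T_split)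
  have FT: "F (Tm \<omega>) = H \<omega>" for \<omega>
    by (simp add: F_def H_def Tm_def xi0_T aF_T bF_T)
  have FH: "(\<integral>\<^sup>+\<omega>. H \<omega> \<partial>?M) = (\<integral>\<^sup>+\<omega>. F \<omega> \<partial>?M)"
    using int_T[OF Fm] by (simp add: FT)
  have sum: "(\<integral>\<^sup>+\<omega>. F \<omega> + H \<omega> \<partial>?M) = key_expect p \<mu> + key_expect p \<mu>"
    using Fm Hm by (simp add: nn_integral_add key FH)
  have le: "F \<omega> + H \<omega> \<le> X0 \<omega>" for \<omega>
    unfolding F_def H_def X0_def by (rule Fr_sum_le[OF aF_finite bF_finite])
  have X0int: "(\<integral>\<^sup>+\<omega>. X0 \<omega> \<partial>?M) = gamma_tot p \<mu>"
    unfolding X0_def by (rule int_xi0_gamma[OF p0])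
  have notAE: "\<not> (AE \<omega> in ?M. X0 \<omega> \<le> F \<omega> + H \<omega>)"
  proof
    assume AE1: "AE \<omega> in ?M. X0 \<omega> \<le> F \<omega> + H \<omega>"
    have xp: "AE \<omega> in ?M. 0 < xi0 (fst \<omega>) (snd \<omega>)" using mu_pos by (rule AE_xi0_pos)
    have AE2: "AE \<omega> in ?M. \<not> (aF (fst \<omega>) (snd \<omega>) = 0 \<longleftrightarrow> bF (fst \<omega>) (snd \<omega>) = 0)"
      using AE1 xp
    proof eventually_elim
      case (elim \<omega>)
      show ?case
      proof
        assume "aF (fst \<omega>) (snd \<omega>) = 0 \<longleftrightarrow> bF (fst \<omega>) (snd \<omega>) = 0"
        then have "F \<omega> + H \<omega> < X0 \<omega>"
          unfolding F_def H_def X0_def using elim(2) by (intro Fr_sum_less aF_finite bF_finite)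
        then show False using elim(1) by simp
      qed
    qed
    define ia where "ia \<omega> = ind0 (aF (fst \<omega>) (snd \<omega>))" for \<omega>
    define ib where "ib \<omega> = ind0 (bF (fst \<omega>) (snd \<omega>))" for \<omega>
    have iam: "ia \<in> borel_measurable ?M" unfolding ia_def by (rule meas_ind0[OF E.meas_aF])
    have ibm: "ib \<in> borel_measurable ?M" unfolding ib_def by (rule meas_ind0[OF E.meas_bF])
    have "(\<integral>\<^sup>+\<omega>. ia \<omega> * ib \<omega> \<partial>?M) = (\<integral>\<^sup>+\<omega>. 0 \<partial>?M)"
      using AE2 by (intro nn_integral_cong_AE) (auto elim!: AE_mp simp: ia_def ib_def ind0_def)
    then have z: "(\<integral>\<^sup>+\<omega>. ia \<omega> \<partial>?M) * (\<integral>\<^sup>+\<omega>. ib \<omega> \<partial>?M) = 0"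
      using indep_ab by (simp add: ia_def ib_def)
    have ibT: "ib \<omega> = ia (Tm \<omega>)" for \<omega>
      by (simp add: ia_def ib_def Tm_def aF_T)
    have eqab: "(\<integral>\<^sup>+\<omega>. ib \<omega> \<partial>?M) = (\<integral>\<^sup>+\<omega>. ia \<omega> \<partial>?M)"
      using int_T[OF iam] by (simp add: ibT)
    have ia0: "(\<integral>\<^sup>+\<omega>. ia \<omega> \<partial>?M) = 0" using z eqab by simp
    have "(\<integral>\<^sup>+\<omega>. ia \<omega> + ib \<omega> \<partial>?M) = (\<integral>\<^sup>+\<omega>. 1 \<partial>?M)"
      using AE2 by (intro nn_integral_cong_AE) (auto elim!: AE_mp simp: ia_def ib_def ind0_def)
    also have "\<dots> = 1" by (simp add: G.emeasure_space_1)
    finally have "(\<integral>\<^sup>+\<omega>. ia \<omega> \<partial>?M) + (\<integral>\<^sup>+\<omega>. ib \<omega> \<partial>?M) = 1"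
      using iam ibm by (simp add: nn_integral_add)
    then show False using ia0 eqab by simp
  qed
  have fin: "(\<integral>\<^sup>+\<omega>. F \<omega> + H \<omega> \<partial>?M) \<noteq> \<infinity>"
  proof -
    have "(\<integral>\<^sup>+\<omega>. F \<omega> + H \<omega> \<partial>?M) \<le> (\<integral>\<^sup>+\<omega>. X0 \<omega> \<partial>?M)" by (intro nn_integral_mono le)
    then show ?thesis using gfin X0int by (auto simp: top_unique)
  qed
  have "(\<integral>\<^sup>+\<omega>. F \<omega> + H \<omega> \<partial>?M) < (\<integral>\<^sup>+\<omega>. X0 \<omega> \<partial>?M)"
    using Fm Hm X0m fin le notAE by (intro nn_integral_less) auto
  then show ?thesis using sum X0int by simp
qed

end

theorem theorem4p3:
  fixes p :: "nat pmf" and \<mu> :: "nat \<Rightarrow> nat \<Rightarrow> real measure"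
  assumes p0: "pmf p 0 = 0"
    and mean_fin: "summable (\<lambda>j. real j * pmf p j)"
    and mean_gt1: "1 < (\<Sum>j. real j * pmf p j)"
    and mu_prob: "\<And>k m. 1 \<le> k \<Longrightarrow> 1 \<le> m \<Longrightarrow> prob_space (\<mu> k m)"
    and mu_borel: "\<And>k m. 1 \<le> k \<Longrightarrow> 1 \<le> m \<Longrightarrow> sets (\<mu> k m) = sets borel"
    and mu_pos: "\<And>k m. 1 \<le> k \<Longrightarrow> 1 \<le> m \<Longrightarrow> (AE x in \<mu> k m. 0 < x)"
    and mu_sym: "\<And>k m. 1 \<le> k \<Longrightarrow> 1 \<le> m \<Longrightarrow> \<mu> k m = \<mu> m k"
    and gamma_fin: "gamma_tot p \<mu> < \<top>"
  shows "key_expect p \<mu> < \<top> \<and> 0 < speed_v p \<mu>"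
proof -
  interpret gw_setup p \<mu>
    by (rule gw_setup.intro) (simp_all add: mu_prob mu_borel mu_sym)
  have lt: "key_expect p \<mu> + key_expect p \<mu> < gamma_tot p \<mu>"
    by (rule key_lt[OF mu_pos p0 gamma_fin])
  have kfin: "key_expect p \<mu> < \<top>"
  proof -
    have "key_expect p \<mu> \<le> key_expect p \<mu> + key_expect p \<mu>" by (rule add_increasing2) simp_all
    also have "\<dots> < gamma_tot p \<mu>" by (rule lt)
    also have "\<dots> < \<top>" by (rule gamma_fin)
    finally show ?thesis .
  qed
  obtain e where e: "key_expect p \<mu> = ennreal e" "0 \<le> e"
    using kfin by (cases "key_expect p \<mu>" rule: ennreal_cases) auto
  obtain g where g: "gamma_tot p \<mu> = ennreal g" "0 \<le> g"
    using gamma_fin by (cases "gamma_tot p \<mu>" rule: ennreal_cases) auto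
  have "ennreal (e + e) = ennreal e + ennreal e" using e(2) by (intro ennreal_plus)
  then have "ennreal (e + e) = key_expect p \<mu> + key_expect p \<mu>" using e(1) by simp
  then have "ennreal (e + e) < ennreal g" using lt g by simp
  then have eg: "e + e < g" using g(2) e(2) by (subst (asm) ennreal_less_iff) auto
  then have gpos: "0 < g" using e by simp
  have "2 * e < g" using eg by simp
  then have "2 * e / g < 1" using gpos by (simp add: divide_less_eq)
  moreover have "2 / g * e = 2 * e / g" by simp
  ultimately have "2 / g * e < 1" by simp
  then have "0 < speed_v p \<mu>"
    unfolding speed_v_def using e g by simp
  then show ?thesis using kfin by simp
qed


end
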